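(* Let $M$ be a term of the CCV $\lambda\mu$-calculus. The call-by-value evaluation of $M$ terminates if and only if the CPS translation $[\![M]\!]$ is solvable (as an untyped $\lambda$-term, i.e., it is $\beta$-convertible to a head normal form).
   Context: CCV $\lambda\mu$-calculus syntax. Ordinary variables $x,y,z,\dots$ and continuation variables $k,l,m,\dots$ are disjoint. Terms $M ::= x \mid \lambda x.M \mid MM \mid (M\ \mathsf{where}\ x:=M) \mid \mu k.J$, jumps $J ::= [k]M \mid (J\ \mathsf{where}\ x:=M)$, where $(L\ \mathsf{where}\ x:=M)$ means $\mathsf{let}\ x=M\ \mathsf{in}\ L$ ($x$ bound in $L$ only); $\lambda x$ and $\mu k$ bind as usual. Values $V$ are variables and $\lambda$-abstractions. For the operational semantics, terms are syntax trees up to $\alpha$-conversion only, except that $[k](L\ \mathsf{where}\ x:=M)$ and $([k]L\ \mathsf{where}\ x:=M)$ are identified and read as $[k](L\ \mathsf{where}\ x:=M)$; in particular $((\mu k.J)\ \mathsf{where}\ x:=M)$ is distinguished from $\mu k.(J\ \mathsf{where}\ x:=M)$, and $((L\ \mathsf{where}\ x:=M)\ \mathsf{where}\ y:=N)$ from $(L\ \mathsf{where}\ x:=(M\ \mathsf{where}\ y:=N))$. Context substitution $J\{[k]\square\mapsto[k](M\ \mathsf{where}\ x:=\square)\}$ replaces recursively each subjump $[k]Q$ of $J$ with $k$ free by $[k](M\ \mathsf{where}\ x:=Q)$ (capture-avoiding); $J\{l/m\}$ replaces each such $[m]Q$ by $[l]Q$. Evaluation contexts: $E ::= \square \mid E[V\square]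 \mid E[\square M] \mid E[(M\ \mathsf{where}\ x:=\square)]$. $E_0$-rewriting ($z$ fresh): $E[(\mu k.J)M]\to E[(zM\ \mathsf{where}\ z:=\mu k.J)]$; $E[V(\mu k.J)]\to E[(Vz\ \mathsf{where}\ z:=\mu k.J)]$; $E[(\lambda x.M)V]\to E[(M\ \mathsf{where}\ x:=V)]$; $E[(M\ \mathsf{where}\ x:=V)]\to E[M\{V/x\}]$; $E[(M\ \mathsf{where}\ x:=\mu k.J)]\to E[\mu k.J\{[k]\square\mapsto[k](M\ \mathsf{where}\ x:=\square)\}]$. $E$-rewriting $\to_E$ is given by: $\mu k.[l]\mu m.J\to_E\mu k.J\{l/m\}$; if $L\to_{E_0}M$ then $L\to_E M$; if $L\to_{E_0}M$ then $\mu k.[l]L\to_E\mu k.[l]M$. A term is $E$-normal if no $E$-rewriting applies to it. The call-by-value evaluation of $M$ terminates if $M\to_E^* N$ for some $E$-normal $N$. Target calculus: sorted $\lambda$-calculus $T::=\lambda k.Q\mid WW$, $Q::=KW\mid TK$, $W::=x\mid\lambda x.T$, $K::=k\mid\lambda x.Q$. CPS translation ($N$ a non-value, fresh bound variables): $\langle V\rangle[K]=KV^*$; $\langle V_1V_2\rangle[K]=V_1^*V_2^*K$; $\langle VN\rangle[K]=\langle N\rangle[\lambda y.V^*yK]$; $\langle NV\rangle[K]=\langle N\rangle[\lambda x.xV^*K]$; $\langle N_1N_2\rangle[K]=\langle N_1\rangle[\lambda x.\langle N_2\rangle[\lambda y.xyK]]$; $\langle (L\ \mathsf{where}\ x:=M)\rangle[K]=\langle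 M\rangle[\lambda x.\langle L\rangle[K]]$ (renaming $x$ if free in $K$); $\langle\mu k.J\rangle[K]=(\lambda k.\langle J\rangle)K$; $\langle[k]M\rangle=\langle M\rangle[k]$; $\langle (J\ \mathsf{where}\ x:=M)\rangle=\langle M\rangle[\lambda x.\langle J\rangle]$; $x^*=x$; $(\lambda x.M)^*=\lambda xk.\langle M\rangle[k]$; $[\![M]\!]=\lambda k.\langle M\rangle[k]$. *)

theory Defs
  imports Main
begin

text \<open>Ordinary variables and continuation variables live in two separate
de Bruijn index spaces.  An ordinary index counts the ordinary binders
(lambda x, and the binder x of (L where x:=M), which scopes over L only);
a continuation index counts the mu-binders.  Since [k](L where x:=M) and ([k]L where x:=M) are
identified and read as [k](L where x:=M), every jump is identified with
one of the form [k]M; we use these as canonical representatives, so a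
jump (J where x:=M) with J = [k]L is represented by Jump k (Where L M).\<close>

datatype trm =
    Var nat
  | Lam trm
  | App trm trm
  | Where trm trm      \<comment> \<open>Where L M = (L where x:=M), x bound (index 0) in L\<close>
  | Mu jmp             \<comment> \<open>mu k. J, k bound (continuation index 0) in J\<close>
and jmp =
    Jump nat trm

fun is_val :: "trm \<Rightarrow> bool" where
  "is_val (Var _) = True"
| "is_val (Lam _) = True"
| "is_val _ = False"

definition ext :: "(nat \<Rightarrow> nat) \<Rightarrow> nat \<Rightarrow> nat" where
  "ext f n = (case n of 0 \<Rightarrow> 0 | Suc m \<Rightarrow> Suc (f m))"

fun omap :: "(nat \<Rightarrow> nat) \<Rightarrow> trm \<Rightarrow> trm"
and omapj :: "(nat \<Rightarrow> nat) \<Rightarrow> jmp \<Rightarrow> jmp" where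
  "omap f (Var n) = Var (f n)"
| "omap f (Lam t) = Lam (omap (ext f) t)"
| "omap f (App s t) = App (omap f s) (omap f t)"
| "omap f (Where s t) = Where (omap (ext f) s) (omap f t)"
| "omap f (Mu J) = Mu (omapj f J)"
| "omapj f (Jump l t) = Jump l (omap f t)"

fun kmap :: "(nat \<Rightarrow> nat) \<Rightarrow> trm \<Rightarrow> trm"
and kmapj :: "(nat \<Rightarrow> nat) \<Rightarrow> jmp \<Rightarrow> jmp" where
  "kmap f (Var n) = Var n"
| "kmap f (Lam t) = Lam (kmap f t)"
| "kmap f (App s t) = App (kmap f s) (kmap f t)"
| "kmap f (Where s t) = Where (kmap f s) (kmap f t)"
| "kmap f (Mu J) = Mu (kmapj (ext f) J)"
| "kmapj f (Jump l t) = Jump (f l) (kmap f t)"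

definition exts :: "(nat \<Rightarrow> trm) \<Rightarrow> nat \<Rightarrow> trm" where
  "exts \<sigma> n = (case n of 0 \<Rightarrow> Var 0 | Suc m \<Rightarrow> omap Suc (\<sigma> m))"

fun osub :: "(nat \<Rightarrow> trm) \<Rightarrow> trm \<Rightarrow> trm"
and osubj :: "(nat \<Rightarrow> trm) \<Rightarrow> jmp \<Rightarrow> jmp" where
  "osub \<sigma> (Var n) = \<sigma> n"
| "osub \<sigma> (Lam t) = Lam (osub (exts \<sigma>) t)"
| "osub \<sigma> (App s t) = App (osub \<sigma> s) (osub \<sigma> t)"
| "osub \<sigma> (Where s t) = Where (osub (exts \<sigma>) s) (osub \<sigma> t)"
| "osub \<sigma> (Mu J) = Mu (osubj (kmap Suc \<circ> \<sigma>) J)"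
| "osubj \<sigma> (Jump l t) = Jump l (osub \<sigma> t)"

definition subst0 :: "trm \<Rightarrow> trm \<Rightarrow> trm" where
  "subst0 M V = osub (\<lambda>n. case n of 0 \<Rightarrow> V | Suc m \<Rightarrow> Var m) M"

text \<open>Context substitution J{[k]\<box> \<mapsto> [k](M where x:=\<box>)}:
csj M k J replaces recursively every subjump [k]Q of J (k free) by
[k](M where x:=Q).  Here M has x as its ordinary index 0; its other free
variables are shifted when going under binders (capture avoidance).\<close>
fun cs :: "trm \<Rightarrow> nat \<Rightarrow> trm \<Rightarrow> trm"
and csj :: "trm \<Rightarrow> nat \<Rightarrow> jmp \<Rightarrow> jmp" where
  "cs M k (Var n) = Var n"
| "cs M k (Lam t) = Lam (cs (omap (ext Suc) M) k t)"
| "cs M k (App s t) = App (cs M k s) (cs M k t)"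
| "cs M k (Where s t) = Where (cs (omap (ext Suc) M) k s) (cs M k t)"
| "cs M k (Mu J) = Mu (csj (kmap Suc M) (Suc k) J)"
| "csj M k (Jump l Q) =
     (if l = k then Jump l (Where M (cs M k Q)) else Jump l (cs M k Q))"

text \<open>J{l/m} for the innermost mu-bound m (index 0), removing that binder.\<close>
definition kren0 :: "nat \<Rightarrow> jmp \<Rightarrow> jmp" where
  "kren0 l J = kmapj (\<lambda>n. case n of 0 \<Rightarrow> l | Suc m \<Rightarrow> m) J"

text \<open>E_0-rewriting: the five rules closed under evaluation contexts
E ::= \<box> | E[V\<box>] | E[\<box>M] | E[(M where x:=\<box>)].\<close>
inductive E0 :: "trm \<Rightarrow> trm \<Rightarrow> bool" where
  mu_app: "E0 (App (Mu J) M) (Where (App (Var 0) (omap Suc M)) (Mu J))"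
| app_mu: "is_val V \<Longrightarrow> E0 (App V (Mu J)) (Where (App (omap Suc V) (Var 0)) (Mu J))"
| beta_v: "is_val V \<Longrightarrow> E0 (App (Lam M) V) (Where M V)"
| where_v: "is_val V \<Longrightarrow> E0 (Where M V) (subst0 M V)"
| where_mu: "E0 (Where M (Mu J)) (Mu (csj (kmap Suc M) 0 J))"
| ctx_argR: "is_val V \<Longrightarrow> E0 L L' \<Longrightarrow> E0 (App V L) (App V L')"
| ctx_funL: "E0 L L' \<Longrightarrow> E0 (App L M) (App L' M)"
| ctx_where: "E0 L L' \<Longrightarrow> E0 (Where M L) (Where M L')"

inductive Estep :: "trm \<Rightarrow> trm \<Rightarrow> bool" where
  rename: "Estep (Mu (Jump l (Mu J))) (Mu (kren0 l J))"
| top: "E0 L M \<Longrightarrow> Estep L M"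
| under_mu: "E0 L M \<Longrightarrow> Estep (Mu (Jump l L)) (Mu (Jump l M))"

definition E_normal :: "trm \<Rightarrow> bool" where
  "E_normal M \<longleftrightarrow> \<not> (\<exists>N. Estep M N)"

definition cbv_terminates :: "trm \<Rightarrow> bool" where
  "cbv_terminates M \<longleftrightarrow> (\<exists>N. Estep\<^sup>*\<^sup>* M N \<and> E_normal N)"

datatype lterm = LVar nat | LLam lterm | LApp lterm lterm

fun lift :: "nat \<Rightarrow> lterm \<Rightarrow> lterm" where
  "lift k (LVar i) = (if i < k then LVar i else LVar (Suc i))"
| "lift k (LLam t) = LLam (lift (Suc k) t)"
| "lift k (LApp s t) = LApp (lift k s) (lift k t)"

fun lsubst :: "lterm \<Rightarrow> lterm \<Rightarrow> nat \<Rightarrow> lterm" where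
  "lsubst (LVar i) s k = (if k < i then LVar (i - 1) else if i = k then s else LVar i)"
| "lsubst (LLam t) s k = LLam (lsubst t (lift 0 s) (Suc k))"
| "lsubst (LApp t u) s k = LApp (lsubst t s k) (lsubst u s k)"

inductive beta :: "lterm \<Rightarrow> lterm \<Rightarrow> bool" where
  redex: "beta (LApp (LLam s) t) (lsubst s t 0)"
| appL: "beta s s' \<Longrightarrow> beta (LApp s t) (LApp s' t)"
| appR: "beta t t' \<Longrightarrow> beta (LApp s t) (LApp s t')"
| abs: "beta s s' \<Longrightarrow> beta (LLam s) (LLam s')"

fun head_var :: "lterm \<Rightarrow> bool" where
  "head_var (LVar _) = True"
| "head_var (LApp s _) = head_var s"
| "head_var (LLam _) = False"

fun hnf :: "lterm \<Rightarrow> bool" where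
  "hnf (LLam t) = hnf t"
| "hnf t = head_var t"

definition solvable :: "lterm \<Rightarrow> bool" where
  "solvable t \<longleftrightarrow> (\<exists>u. equivclp beta t u \<and> hnf u)"

text \<open>ro / rk map free ordinary / continuation variables of the source term
to target de Bruijn indices; K is a target term in the current target scope.
cps ro rk M K = <M>[K], cpsj ro rk J = <J>, vstar ro rk V = V*.\<close>
fun cps :: "(nat \<Rightarrow> nat) \<Rightarrow> (nat \<Rightarrow> nat) \<Rightarrow> trm \<Rightarrow> lterm \<Rightarrow> lterm"
and cpsj :: "(nat \<Rightarrow> nat) \<Rightarrow> (nat \<Rightarrow> nat) \<Rightarrow> jmp \<Rightarrow> lterm"
and vstar :: "(nat \<Rightarrow> nat) \<Rightarrow> (nat \<Rightarrow> nat) \<Rightarrow> trm \<Rightarrow> lterm" where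
  "vstar ro rk (Var n) = LVar (ro n)"
| "vstar ro rk (Lam M) =
     LLam (LLam (cps (Suc \<circ> ext ro) (\<lambda>n. Suc (Suc (rk n))) M (LVar 0)))"
| "vstar ro rk (App s t) = LVar 0"
| "vstar ro rk (Where s t) = LVar 0"
| "vstar ro rk (Mu J) = LVar 0"
| "cps ro rk (Var n) K = LApp K (vstar ro rk (Var n))"
| "cps ro rk (Lam M) K = LApp K (vstar ro rk (Lam M))"
| "cps ro rk (App s t) K =
     (if is_val s \<and> is_val t then LApp (LApp (vstar ro rk s) (vstar ro rk t)) K
      else if is_val s then
        cps ro rk t (LLam (LApp (LApp (vstar (Suc \<circ> ro) (Suc \<circ> rk) s) (LVar 0)) (lift 0 K)))
      else if is_val t then
        cps ro rk s (LLam (LApp (LApp (LVar 0) (vstar (Suc \<circ> ro) (Suc \<circ> rk) t)) (lift 0 K)))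
      else
        cps ro rk s (LLam (cps (Suc \<circ> ro) (Suc \<circ> rk) t
           (LLam (LApp (LApp (LVar 1) (LVar 0)) (lift 0 (lift 0 K)))))))"
| "cps ro rk (Where L M) K = cps ro rk M (LLam (cps (ext ro) (Suc \<circ> rk) L (lift 0 K)))"
| "cps ro rk (Mu J) K = LApp (LLam (cpsj (Suc \<circ> ro) (ext rk) J)) K"
| "cpsj ro rk (Jump k M) = cps ro rk M (LVar (rk k))"

text \<open>[[M]] = \<lambda>k. <M>[k]; free ordinary variable n and free continuation
variable n of M are sent to distinct target variables (2n and 2n+1).\<close>
definition CPS :: "trm \<Rightarrow> lterm" where
  "CPS M = LLam (cps (\<lambda>n. Suc (2 * n)) (\<lambda>n. Suc (2 * n + 1)) M (LVar 0))"

end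

theory Submission
  imports Defs
begin



lemma lift_lift:
  "i < k + 1 \<Longrightarrow> lift (Suc k) (lift i t) = lift i (lift k t)"
  by (induct t arbitrary: i k) auto

lemma lift_subst [simp]:
  "j < i + 1 \<Longrightarrow> lift i (lsubst t s j) = lsubst (lift (i + 1) t) (lift i s) j"
  by (induct t arbitrary: i j s)
    (simp_all add: diff_Suc lift_lift split: nat.split)

lemma lift_subst_lt:
  "i < j + 1 \<Longrightarrow> lift i (lsubst t s j) = lsubst (lift i t) (lift i s) (j + 1)"
  by (induct t arbitrary: i j s) (auto simp add: lift_lift)

lemma subst_lift [simp]: "lsubst (lift k t) s k = t"
  by (induct t arbitrary: k s) simp_all

lemma subst_subst:
  "i < j + 1 \<Longrightarrow> lsubst (lsubst t (lift i v) (Suc j)) (lsubst u v j) i = lsubst (lsubst t u i) v j"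
  by (induct t arbitrary: i j u v)
    (simp_all add: diff_Suc lift_lift [symmetric] lift_subst_lt split: nat.split)




inductive par :: "lterm \<Rightarrow> lterm \<Rightarrow> bool" where
  pvar: "par (LVar n) (LVar n)"
| pabs: "par s t \<Longrightarrow> par (LLam s) (LLam t)"
| papp: "par s s' \<Longrightarrow> par t t' \<Longrightarrow> par (LApp s t) (LApp s' t')"
| pbeta: "par s s' \<Longrightarrow> par t t' \<Longrightarrow> par (LApp (LLam s) t) (lsubst s' t' 0)"


inductive_cases parVarE: "par (LVar n) t"
inductive_cases parLamE: "par (LLam s) t"
inductive_cases parAppE: "par (LApp s t) u"

lemma par_refl [simp]: "par t t"
  by (induct t) (auto intro: par.intros)

lemma beta_par: "beta s t \<Longrightarrow> par s t"
  by (induct rule: beta.induct) (auto intro: par.intros)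

lemma rtr_abs: "beta\<^sup>*\<^sup>* s s' \<Longrightarrow> beta\<^sup>*\<^sup>* (LLam s) (LLam s')"
  by (induct rule: rtranclp_induct) (auto intro: rtranclp.rtrancl_into_rtrancl beta.abs)

lemma rtr_appL: "beta\<^sup>*\<^sup>* s s' \<Longrightarrow> beta\<^sup>*\<^sup>* (LApp s t) (LApp s' t)"
  by (induct rule: rtranclp_induct) (auto intro: rtranclp.rtrancl_into_rtrancl beta.appL)

lemma rtr_appR: "beta\<^sup>*\<^sup>* t t' \<Longrightarrow> beta\<^sup>*\<^sup>* (LApp s t) (LApp s t')"
  by (induct rule: rtranclp_induct) (auto intro: rtranclp.rtrancl_into_rtrancl beta.appR)

lemma rtr_app: "beta\<^sup>*\<^sup>* s s' \<Longrightarrow> beta\<^sup>*\<^sup>* t t' \<Longrightarrow> beta\<^sup>*\<^sup>* (LApp s t) (LApp s' t')"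
  by (meson rtr_appL rtr_appR rtranclp_trans)

lemma par_beta: "par s t \<Longrightarrow> beta\<^sup>*\<^sup>* s t"
proof (induct rule: par.induct)
  case (pvar n) then show ?case by simp
next
  case (pabs s t) then show ?case by (simp add: rtr_abs)
next
  case (papp s s' t t') then show ?case by (simp add: rtr_app)
next
  case (pbeta s s' t t')
  have "beta\<^sup>*\<^sup>* (LApp (LLam s) t) (LApp (LLam s') t')" using pbeta by (simp add: rtr_app rtr_abs)
  then show ?case by (meson beta.redex rtranclp.rtrancl_into_rtrancl)
qed

lemma par_lift [simp]: "par t t' \<Longrightarrow> par (lift n t) (lift n t')"
  by (induct arbitrary: n rule: par.induct) (auto intro: pvar pabs papp pbeta)

lemma par_subst:
  "par t t' \<Longrightarrow> par s s' \<Longrightarrow> par (lsubst t s n) (lsubst t' s' n)"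
proof (induct arbitrary: s s' n rule: par.induct)
  case (pbeta a a' b b')
  have "par (LApp (LLam (lsubst a (lift 0 s) (Suc n))) (lsubst b s n))
     (lsubst (lsubst a' (lift 0 s') (Suc n)) (lsubst b' s' n) 0)"
    using pbeta by (intro par.pbeta) auto
  then show ?case by (simp add: subst_subst[of 0, simplified])
next
  case (pvar n) then show ?case by (auto simp: par_refl)
qed (auto intro!: pabs papp)

fun cd :: "lterm \<Rightarrow> lterm" where
  "cd (LVar n) = LVar n"
| "cd (LApp (LVar n) t) = LApp (LVar n) (cd t)"
| "cd (LApp (LApp s1 s2) t) = LApp (cd (LApp s1 s2)) (cd t)"
| "cd (LApp (LLam u) t) = lsubst (cd u) (cd t) 0"
| "cd (LLam s) = LLam (cd s)"

lemma par_cd: "par s t \<Longrightarrow> par t (cd s)"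
proof (induct s arbitrary: t rule: cd.induct)
  case (1 n) then show ?case by (auto elim: parVarE intro: pvar)
next
  case (2 n u)
  from 2(2) show ?case
  proof (rule parAppE)
    fix a b assume "t = LApp a b" "par (LVar n) a" "par u b"
    then show ?thesis using 2(1) by (auto elim: parVarE intro!: papp pvar)
  qed simp
next
  case (3 s1 s2 u)
  from 3(3) show ?case
  proof (rule parAppE)
    fix a b assume "t = LApp a b" "par (LApp s1 s2) a" "par u b"
    then show ?thesis using 3(1,2) by (auto intro!: papp)
  qed simp
next
  case (4 u v)
  from 4(3) show ?case
  proof (rule parAppE)
    fix a b assume t: "t = LApp a b" and ua: "par (LLam u) a" and vb: "par v b"
    from ua obtain a' where "a = LLam a'" "par u a'" by (auto elim: parLamE)
    then show ?thesis using t vb 4(1,2) by (auto intro!: pbeta)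
  next
    fix a a' b b' assume "LLam u = LLam a" "t = lsubst a' b' 0" "par a a'" "par v b'"
    then show ?thesis using 4(1,2) by (auto intro!: par_subst)
  qed
next
  case (5 u)
  from 5(2) obtain t' where "t = LLam t'" "par u t'" by (auto elim: parLamE)
  then show ?case using 5(1) by (auto intro!: pabs)
qed

lemma par_diamond: "par a b \<Longrightarrow> par a c \<Longrightarrow> \<exists>d. par b d \<and> par c d"
  using par_cd by blast

lemma par_strip: "par\<^sup>*\<^sup>* a c \<Longrightarrow> par a b \<Longrightarrow> \<exists>d. par\<^sup>*\<^sup>* b d \<and> par c d"
proof (induct rule: rtranclp_induct)
  case base then show ?case by auto
next
  case (step c0 c)
  then obtain d0 where "par\<^sup>*\<^sup>* b d0" "par c0 d0" by blast
  with step(2) obtain e where "par c e" "par d0 e" using par_diamond by blast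
  then show ?case using \<open>par\<^sup>*\<^sup>* b d0\<close> by (meson rtranclp.rtrancl_into_rtrancl)
qed

lemma par_confl: "par\<^sup>*\<^sup>* a b \<Longrightarrow> par\<^sup>*\<^sup>* a c \<Longrightarrow> \<exists>d. par\<^sup>*\<^sup>* b d \<and> par\<^sup>*\<^sup>* c d"
proof (induct rule: rtranclp_induct)
  case base then show ?case by auto
next
  case (step b0 b)
  then obtain d0 where "par\<^sup>*\<^sup>* b0 d0" "par\<^sup>*\<^sup>* c d0" by blast
  with par_strip[OF this(1) step(2)] show ?case
    by (meson rtranclp.rtrancl_into_rtrancl)
qed

lemma pars_betas: "par\<^sup>*\<^sup>* a b \<Longrightarrow> beta\<^sup>*\<^sup>* a b"
  by (induct rule: rtranclp_induct) (auto dest: par_beta)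

lemma betas_pars: "beta\<^sup>*\<^sup>* a b \<Longrightarrow> par\<^sup>*\<^sup>* a b"
  by (induct rule: rtranclp_induct) (auto dest: beta_par intro: rtranclp.rtrancl_into_rtrancl)

lemma beta_confl: "beta\<^sup>*\<^sup>* a b \<Longrightarrow> beta\<^sup>*\<^sup>* a c \<Longrightarrow> \<exists>d. beta\<^sup>*\<^sup>* b d \<and> beta\<^sup>*\<^sup>* c d"
  by (meson betas_pars pars_betas par_confl)

lemma beta_CR: "equivclp beta a b \<Longrightarrow> \<exists>d. beta\<^sup>*\<^sup>* a d \<and> beta\<^sup>*\<^sup>* b d"
  unfolding equivclp_def
proof (induct rule: rtranclp_induct)
  case base then show ?case by auto
next
  case (step b0 b)
  then obtain d0 where d0: "beta\<^sup>*\<^sup>* a d0" "beta\<^sup>*\<^sup>* b0 d0" by blast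
  from step(2) show ?case
  proof (cases rule: symclpE)
    case base
    then obtain e where "beta\<^sup>*\<^sup>* b e" "beta\<^sup>*\<^sup>* d0 e"
      using beta_confl[of b0 b d0] d0 by blast
    then show ?thesis using d0 by (meson rtranclp_trans)
  next
    case sym
    then show ?thesis using d0 by (meson converse_rtranclp_into_rtranclp)
  qed
qed

inductive_cases betaAppE: "beta (LApp s t) u"
inductive_cases betaLamE: "beta (LLam s) u"
inductive_cases betaVarE: "beta (LVar n) u"

lemma head_var_beta: "beta s s' \<Longrightarrow> head_var s \<Longrightarrow> head_var s'"
  by (induct rule: beta.induct) auto

lemma hnf_beta: "beta t u \<Longrightarrow> hnf t \<Longrightarrow> hnf u"
  by (induct rule: beta.induct) (auto intro: head_var_beta)

lemma hnf_betas: "beta\<^sup>*\<^sup>* t u \<Longrightarrow> hnf t \<Longrightarrow> hnf u"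
  by (induct rule: rtranclp_induct) (auto intro: hnf_beta)




notation LApp (infixl \<open>\<degree>\<close> 200)

abbreviation apps :: "lterm \<Rightarrow> lterm list \<Rightarrow> lterm" (infixl \<open>\<degree>\<degree>\<close> 150) where
  "t \<degree>\<degree> ts == foldl (\<degree>) t ts"


notation beta (infixl \<open>\<rightarrow>\<^sub>\<beta>\<close> 50)

abbreviation beta_reds :: "lterm \<Rightarrow> lterm \<Rightarrow> bool" (infixl \<open>\<rightarrow>\<^sub>\<beta>\<^sup>*\<close> 50) where
  "s \<rightarrow>\<^sub>\<beta>\<^sup>* t == beta\<^sup>*\<^sup>* s t"

inductive_cases beta_cases [elim!]:
  "LVar i \<rightarrow>\<^sub>\<beta> t"
  "LLam r \<rightarrow>\<^sub>\<beta> s"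
  "s \<degree> t \<rightarrow>\<^sub>\<beta> u"

lemma apps_eq_tail_conv [iff]: "(r \<degree>\<degree> ts = s \<degree>\<degree> ts) = (r = s)"
  by (induct ts rule: rev_induct) auto

lemma Var_eq_apps_conv [iff]: "(LVar m = s \<degree>\<degree> ss) = (LVar m = s \<and> ss = [])"
  by (induct ss arbitrary: s) auto

lemma Var_apps_eq_Var_apps_conv [iff]:
    "(LVar m \<degree>\<degree> rs = LVar n \<degree>\<degree> ss) = (m = n \<and> rs = ss)"
  apply (induct rs arbitrary: ss rule: rev_induct)
   apply simp
   apply blast
  apply (induct_tac ss rule: rev_induct)
   apply auto
  done

lemma App_eq_foldl_conv:
  "(r \<degree> s = t \<degree>\<degree> ts) =
    (if ts = [] then r \<degree> s = t
    else (\<exists>ss. ts = ss @ [s] \<and> r = t \<degree>\<degree> ss))"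
  apply (rule_tac xs = ts in rev_exhaust)
   apply auto
  done

lemma Abs_eq_apps_conv [iff]:
    "(LLam r = s \<degree>\<degree> ss) = (LLam r = s \<and> ss = [])"
  by (induct ss rule: rev_induct) auto

lemma apps_eq_Abs_conv [iff]: "(s \<degree>\<degree> ss = LLam r) = (s = LLam r \<and> ss = [])"
  by (induct ss rule: rev_induct) auto

lemma Abs_apps_eq_Abs_apps_conv [iff]:
    "(LLam r \<degree>\<degree> rs = LLam s \<degree>\<degree> ss) = (r = s \<and> rs = ss)"
  apply (induct rs arbitrary: ss rule: rev_induct)
   apply simp
   apply blast
  apply (induct_tac ss rule: rev_induct)
   apply auto
  done

lemma Abs_App_neq_Var_apps [iff]:
    "LLam s \<degree> t \<noteq> LVar n \<degree>\<degree> ss"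
  by (induct ss arbitrary: s t rule: rev_induct) auto

lemma Var_apps_neq_Abs_apps [iff]:
    "LVar n \<degree>\<degree> ts \<noteq> LLam r \<degree>\<degree> ss"
  apply (induct ss arbitrary: ts rule: rev_induct)
   apply simp
  apply (induct_tac ts rule: rev_induct)
   apply auto
  done

lemma lift_map [simp]:
    "lift i (t \<degree>\<degree> ts) = lift i t \<degree>\<degree> map (\<lambda>t. lift i t) ts"
  by (induct ts arbitrary: t) simp_all

lemma subst_map [simp]:
    "lsubst (t \<degree>\<degree> ts) u i = lsubst t u i \<degree>\<degree> map (\<lambda>t. lsubst t u i) ts"
  by (induct ts arbitrary: t) simp_all

lemma app_last: "(t \<degree>\<degree> ts) \<degree> u = t \<degree>\<degree> (ts @ [u])"
  by simp

definition
  step1 :: "('a => 'a => bool) => 'a list => 'a list => bool" where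
  "step1 r =
    (\<lambda>ys xs. \<exists>us z z' vs. xs = us @ z # vs \<and> r z' z \<and> ys =
      us @ z' # vs)"

lemma not_Nil_step1 [iff]: "\<not> step1 r [] xs"
  apply (unfold step1_def)
  apply blast
  done

lemma not_step1_Nil [iff]: "\<not> step1 r xs []"
  apply (unfold step1_def)
  apply blast
  done

lemma Cons_step1_Cons [iff]:
    "(step1 r (y # ys) (x # xs)) =
      (r y x \<and> xs = ys \<or> x = y \<and> step1 r ys xs)"
  apply (unfold step1_def)
  apply (rule iffI)
   apply (erule exE)
   apply (rename_tac ts)
   apply (case_tac ts)
    apply fastforce
   apply force
  apply (erule disjE)
   apply blast
  apply (blast intro: Cons_eq_appendI)
  done

lemma append_step1I:
  "step1 r ys xs \<and> vs = us \<or> ys = xs \<and> step1 r vs us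
    ==> step1 r (ys @ vs) (xs @ us)"
  apply (unfold step1_def)
  apply auto
   apply blast
  apply (blast intro: append_eq_appendI)
  done

lemma Cons_step1E [elim!]:
  assumes "step1 r ys (x # xs)"
    and "!!y. ys = y # xs \<Longrightarrow> r y x \<Longrightarrow> R"
    and "!!zs. ys = x # zs \<Longrightarrow> step1 r zs xs \<Longrightarrow> R"
  shows R
  using assms
  apply (cases ys)
   apply (simp add: step1_def)
  apply blast
  done

abbreviation
  list_beta :: "lterm list => lterm list => bool"  (infixl \<open>\<Rrightarrow>\<close> 50) where
  "rs \<Rrightarrow> ss == step1 beta rs ss"

lemma head_Var_reduction:
  "LVar n \<degree>\<degree> rs \<rightarrow>\<^sub>\<beta> v \<Longrightarrow> \<exists>ss. rs \<Rrightarrow> ss \<and> v = LVar n \<degree>\<degree> ss"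
  apply (induct u == "LVar n \<degree>\<degree> rs" v arbitrary: rs set: beta)
     apply simp
    apply (rule_tac xs = rs in rev_exhaust)
     apply simp
    apply (atomize, force intro: append_step1I)
   apply (rule_tac xs = rs in rev_exhaust)
    apply simp
    apply (auto 0 3 intro: disjI2 [THEN append_step1I])
  done

lemma apps_betasE [elim!]:
  assumes major: "r \<degree>\<degree> rs \<rightarrow>\<^sub>\<beta> s"
    and cases: "!!r'. [| r \<rightarrow>\<^sub>\<beta> r'; s = r' \<degree>\<degree> rs |] ==> R"
      "!!rs'. [| rs \<Rrightarrow> rs'; s = r \<degree>\<degree> rs' |] ==> R"
      "!!t u us. [| r = LLam t; rs = u # us; s = (lsubst t u 0) \<degree>\<degree> us |] ==> R"
  shows R
proof -
  from major have
   "(\<exists>r'. r \<rightarrow>\<^sub>\<beta> r' \<and> s = r' \<degree>\<degree> rs) \<or>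
    (\<exists>rs'. rs \<Rrightarrow> rs' \<and> s = r \<degree>\<degree> rs') \<or>
    (\<exists>t u us. r = LLam t \<and> rs = u # us \<and> s = (lsubst t u 0) \<degree>\<degree> us)"
  proof -
    have "u \<rightarrow>\<^sub>\<beta> v \<Longrightarrow> u = r \<degree>\<degree> rs \<Longrightarrow>
     (\<exists>r'. r \<rightarrow>\<^sub>\<beta> r' \<and> v = r' \<degree>\<degree> rs) \<or>
    (\<exists>rs'. rs \<Rrightarrow> rs' \<and> v = r \<degree>\<degree> rs') \<or>
    (\<exists>t u us. r = LLam t \<and> rs = u # us \<and> v = (lsubst t u 0) \<degree>\<degree> us)" for u v r rs
    proof (induct u v arbitrary: r rs rule: beta.induct)
      case (redex a b r rs)
      show ?case
      proof (cases "rs = []")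
        case True with redex show ?thesis by (auto intro: beta.redex)
      next
        case False
        with redex obtain ss where "rs = ss @ [b]" "LLam a = r \<degree>\<degree> ss"
          by (auto simp: App_eq_foldl_conv split: if_splits)
        then show ?thesis by auto
      qed
    next
      case (appL a a' t r rs)
      show ?case
      proof (cases "rs = []")
        case True with appL show ?thesis by (auto intro: beta.appL)
      next
        case False
        with appL obtain ss where ss: "rs = ss @ [t]" "a = r \<degree>\<degree> ss"
          by (auto simp: App_eq_foldl_conv split: if_splits)
        from appL(2)[OF ss(2)] show ?thesis
        proof (elim disjE exE conjE)
          fix r' assume "r \<rightarrow>\<^sub>\<beta> r'" "a' = r' \<degree>\<degree> ss"
          then show ?thesis using ss by auto
        next
          fix rs' assume "ss \<Rrightarrow> rs'" "a' = r \<degree>\<degree> rs'"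
          then show ?thesis using ss
            by (intro disjI2 disjI1 exI[of _ "rs' @ [t]"]) (auto intro: append_step1I)
        next
          fix t0 u us assume "r = LLam t0" "ss = u # us" "a' = (lsubst t0 u 0) \<degree>\<degree> us"
          then show ?thesis using ss by auto
        qed
      qed
    next
      case (appR t t' a r rs)
      show ?case
      proof (cases "rs = []")
        case True with appR show ?thesis by (auto intro: beta.appR)
      next
        case False
        with appR obtain ss where ss: "rs = ss @ [t]" "a = r \<degree>\<degree> ss"
          by (auto simp: App_eq_foldl_conv split: if_splits)
        have "rs \<Rrightarrow> ss @ [t']" using ss appR(1)
          by (auto intro!: append_step1I)
        then show ?thesis using ss by auto
      qed
    next
      case (abs a a' r rs)
      then show ?case by (auto intro: beta.abs)
    qed
    then show ?thesis using major by blast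
  qed
  with cases show ?thesis by blast
qed




declare listrel_mono [mono_set]

inductive
  sred :: "lterm \<Rightarrow> lterm \<Rightarrow> bool"  (infixl \<open>\<rightarrow>\<^sub>s\<close> 50)
  and sredlist :: "lterm list \<Rightarrow> lterm list \<Rightarrow> bool"  (infixl \<open>[\<rightarrow>\<^sub>s]\<close> 50)
where
  "s [\<rightarrow>\<^sub>s] t \<equiv> listrelp (\<rightarrow>\<^sub>s) s t"
| SVar: "rs [\<rightarrow>\<^sub>s] rs' \<Longrightarrow> LVar x \<degree>\<degree> rs \<rightarrow>\<^sub>s LVar x \<degree>\<degree> rs'"
| SAbs: "r \<rightarrow>\<^sub>s r' \<Longrightarrow> ss [\<rightarrow>\<^sub>s] ss' \<Longrightarrow> LLam r \<degree>\<degree> ss \<rightarrow>\<^sub>s LLam r' \<degree>\<degree> ss'"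
| SBeta: "(lsubst r s 0) \<degree>\<degree> ss \<rightarrow>\<^sub>s t \<Longrightarrow> LLam r \<degree> s \<degree>\<degree> ss \<rightarrow>\<^sub>s t"

lemma refl_listrelp: "\<forall>x\<in>set xs. R x x \<Longrightarrow> listrelp R xs xs"
  by (induct xs) (auto intro: listrelp.intros)


lemma listrelp_conj1: "listrelp (\<lambda>x y. R x y \<and> S x y) x y \<Longrightarrow> listrelp R x y"
  by (erule listrelp.induct) (auto intro: listrelp.intros)

lemma listrelp_conj2: "listrelp (\<lambda>x y. R x y \<and> S x y) x y \<Longrightarrow> listrelp S x y"
  by (erule listrelp.induct) (auto intro: listrelp.intros)

lemma listrelp_app:
  assumes xsys: "listrelp R xs ys"
  shows "listrelp R xs' ys' \<Longrightarrow> listrelp R (xs @ xs') (ys @ ys')" using xsys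
  by (induct arbitrary: xs' ys') (auto intro: listrelp.intros)

lemma lemma1:
  assumes r: "r \<rightarrow>\<^sub>s r'" and s: "s \<rightarrow>\<^sub>s s'"
  shows "r \<degree> s \<rightarrow>\<^sub>s r' \<degree> s'" using r
proof induct
  case (SVar rs rs' x)
  then have "rs [\<rightarrow>\<^sub>s] rs'" by (rule listrelp_conj1)
  moreover have "[s] [\<rightarrow>\<^sub>s] [s']" by (iprover intro: s listrelp.intros)
  ultimately have "rs @ [s] [\<rightarrow>\<^sub>s] rs' @ [s']" by (rule listrelp_app)
  hence "LVar x \<degree>\<degree> (rs @ [s]) \<rightarrow>\<^sub>s LVar x \<degree>\<degree> (rs' @ [s'])" by (rule sred.SVar)
  thus ?case by (simp only: app_last)
next
  case (SAbs r r' ss ss')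
  from SAbs(3) have "ss [\<rightarrow>\<^sub>s] ss'" by (rule listrelp_conj1)
  moreover have "[s] [\<rightarrow>\<^sub>s] [s']" by (iprover intro: s listrelp.intros)
  ultimately have "ss @ [s] [\<rightarrow>\<^sub>s] ss' @ [s']" by (rule listrelp_app)
  with \<open>r \<rightarrow>\<^sub>s r'\<close> have "LLam r \<degree>\<degree> (ss @ [s]) \<rightarrow>\<^sub>s LLam r' \<degree>\<degree> (ss' @ [s'])"
    by (rule sred.SAbs)
  thus ?case by (simp only: app_last)
next
  case (SBeta r u ss t)
  hence "(lsubst r u 0) \<degree>\<degree> (ss @ [s]) \<rightarrow>\<^sub>s t \<degree> s'" by (simp only: app_last)
  hence "LLam r \<degree> u \<degree>\<degree> (ss @ [s]) \<rightarrow>\<^sub>s t \<degree> s'" by (rule sred.SBeta)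
  thus ?case by (simp only: app_last)
qed

lemma lemma1':
  assumes ts: "ts [\<rightarrow>\<^sub>s] ts'"
  shows "r \<rightarrow>\<^sub>s r' \<Longrightarrow> r \<degree>\<degree> ts \<rightarrow>\<^sub>s r' \<degree>\<degree> ts'" using ts
  by (induct arbitrary: r r') (auto intro: lemma1)

lemma refl_sred: "t \<rightarrow>\<^sub>s t"
proof (induct t)
  case (LVar x)
  have "LVar x \<degree>\<degree> [] \<rightarrow>\<^sub>s LVar x \<degree>\<degree> []" by (rule sred.SVar) (rule listrelp.Nil)
  then show ?case by simp
next
  case (LLam t)
  have "LLam t \<degree>\<degree> [] \<rightarrow>\<^sub>s LLam t \<degree>\<degree> []" by (rule sred.SAbs[OF LLam]) (rule listrelp.Nil)
  then show ?case by simp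
next
  case (LApp a b) then show ?case by (rule lemma1)
qed

lemma refl_sreds: "ts [\<rightarrow>\<^sub>s] ts"
  by (simp add: refl_sred refl_listrelp)

lemma lemma2_1:
  assumes beta: "t \<rightarrow>\<^sub>\<beta> u"
  shows "t \<rightarrow>\<^sub>s u" using beta
proof induct
  case (redex s t)
  have "LLam s \<degree> t \<degree>\<degree> [] \<rightarrow>\<^sub>s (lsubst s t 0) \<degree>\<degree> []" by (iprover intro: sred.SBeta refl_sred)
  thus ?case by simp
next
  case (appL s t u)
  thus ?case by (iprover intro: lemma1 refl_sred)
next
  case (appR s t u)
  thus ?case by (iprover intro: lemma1 refl_sred)
next
  case (abs s t)
  hence "LLam s \<degree>\<degree> [] \<rightarrow>\<^sub>s LLam t \<degree>\<degree> []" by (iprover intro: sred.SAbs listrelp.Nil)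
  thus ?case by simp
qed

lemma sred_lift:
  assumes s: "s \<rightarrow>\<^sub>s t"
  shows "lift i s \<rightarrow>\<^sub>s lift i t" using s
proof (induct arbitrary: i)
  case (SVar rs rs' x)
  hence "map (\<lambda>t. lift i t) rs [\<rightarrow>\<^sub>s] map (\<lambda>t. lift i t) rs'"
    by induct (auto intro: listrelp.intros)
  thus ?case by (cases "x < i") (auto intro: sred.SVar)
next
  case (SAbs r r' ss ss')
  from SAbs(3) have "map (\<lambda>t. lift i t) ss [\<rightarrow>\<^sub>s] map (\<lambda>t. lift i t) ss'"
    by induct (auto intro: listrelp.intros)
  thus ?case by (auto intro: sred.SAbs SAbs)
next
  case (SBeta r s ss t)
  thus ?case by (auto intro: sred.SBeta)
qed

lemma lemma3:
  assumes r: "r \<rightarrow>\<^sub>s r'"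
  shows "s \<rightarrow>\<^sub>s s' \<Longrightarrow> (lsubst r s x) \<rightarrow>\<^sub>s (lsubst r' s' x)" using r
proof (induct arbitrary: s s' x)
  case (SVar rs rs' y)
  hence "map (\<lambda>t. (lsubst t s x)) rs [\<rightarrow>\<^sub>s] map (\<lambda>t. (lsubst t s' x)) rs'"
    by induct (auto intro: listrelp.intros SVar)
  moreover have "(lsubst (LVar y) s x) \<rightarrow>\<^sub>s (lsubst (LVar y) s' x)"
  proof (cases "y < x")
    case True thus ?thesis by simp (rule refl_sred)
  next
    case False
    thus ?thesis
      by (cases "y = x") (auto simp add: SVar intro: refl_sred)
  qed
  ultimately show ?case by (simp only: subst_map) (rule lemma1')
next
  case (SAbs r r' ss ss')
  from SAbs(4) have "lift 0 s \<rightarrow>\<^sub>s lift 0 s'" by (rule sred_lift)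
  hence "(lsubst r (lift 0 s) (Suc x)) \<rightarrow>\<^sub>s (lsubst r' (lift 0 s') (Suc x))" by (fast intro: SAbs.hyps)
  moreover from SAbs(3) have "map (\<lambda>t. (lsubst t s x)) ss [\<rightarrow>\<^sub>s] map (\<lambda>t. (lsubst t s' x)) ss'"
    by induct (auto intro: listrelp.intros SAbs)
  ultimately show ?case by simp (rule sred.SAbs)
next
  case (SBeta r u ss t)
  thus ?case by (auto simp add: subst_subst intro: sred.SBeta)
qed

lemma lemma4_aux:
  assumes rs: "listrelp (\<lambda>t u. t \<rightarrow>\<^sub>s u \<and> (\<forall>r. u \<rightarrow>\<^sub>\<beta> r \<longrightarrow> t \<rightarrow>\<^sub>s r)) rs rs'"
  shows "rs' \<Rrightarrow> ss \<Longrightarrow> rs [\<rightarrow>\<^sub>s] ss" using rs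
proof (induct arbitrary: ss)
  case Nil
  thus ?case by cases (auto intro: listrelp.Nil)
next
  case (Cons x y xs ys)
  note Cons' = Cons
  show ?case
  proof (cases ss)
    case Nil with Cons show ?thesis by simp
  next
    case (Cons y' ys')
    hence ss: "ss = y' # ys'" by simp
    from Cons Cons' have "y \<rightarrow>\<^sub>\<beta> y' \<and> ys' = ys \<or> y' = y \<and> ys \<Rrightarrow> ys'" by simp
    hence "x # xs [\<rightarrow>\<^sub>s] y' # ys'"
    proof
      assume H: "y \<rightarrow>\<^sub>\<beta> y' \<and> ys' = ys"
      with Cons' have "x \<rightarrow>\<^sub>s y'" by blast
      moreover from Cons' have "xs [\<rightarrow>\<^sub>s] ys" by (iprover dest: listrelp_conj1)
      ultimately have "x # xs [\<rightarrow>\<^sub>s] y' # ys" by (rule listrelp.Cons)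
      with H show ?thesis by simp
    next
      assume H: "y' = y \<and> ys \<Rrightarrow> ys'"
      with Cons' have "x \<rightarrow>\<^sub>s y'" by blast
      moreover from H have "xs [\<rightarrow>\<^sub>s] ys'" by (blast intro: Cons')
      ultimately show ?thesis by (rule listrelp.Cons)
    qed
    with ss show ?thesis by simp
  qed
qed

lemma lemma4:
  assumes r: "r \<rightarrow>\<^sub>s r'"
  shows "r' \<rightarrow>\<^sub>\<beta> r'' \<Longrightarrow> r \<rightarrow>\<^sub>s r''" using r
proof (induct arbitrary: r'')
  case (SVar rs rs' x)
  then obtain ss where rs: "rs' \<Rrightarrow> ss" and r'': "r'' = LVar x \<degree>\<degree> ss"
    by (blast dest: head_Var_reduction)
  from SVar(1) rs have "rs [\<rightarrow>\<^sub>s] ss" by (rule lemma4_aux)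
  hence "LVar x \<degree>\<degree> rs \<rightarrow>\<^sub>s LVar x \<degree>\<degree> ss" by (rule sred.SVar)
  with r'' show ?case by simp
next
  case (SAbs r r' ss ss')
  from \<open>LLam r' \<degree>\<degree> ss' \<rightarrow>\<^sub>\<beta> r''\<close> show ?case
  proof
    fix s
    assume r'': "r'' = s \<degree>\<degree> ss'"
    assume "LLam r' \<rightarrow>\<^sub>\<beta> s"
    then obtain r''' where s: "s = LLam r'''" and r''': "r' \<rightarrow>\<^sub>\<beta> r'''" by cases auto
    from r''' have "r \<rightarrow>\<^sub>s r'''" by (blast intro: SAbs)
    moreover from SAbs have "ss [\<rightarrow>\<^sub>s] ss'" by (iprover dest: listrelp_conj1)
    ultimately have "LLam r \<degree>\<degree> ss \<rightarrow>\<^sub>s LLam r''' \<degree>\<degree> ss'" by (rule sred.SAbs)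
    with r'' s show "LLam r \<degree>\<degree> ss \<rightarrow>\<^sub>s r''" by simp
  next
    fix rs'
    assume "ss' \<Rrightarrow> rs'"
    with SAbs(3) have "ss [\<rightarrow>\<^sub>s] rs'" by (rule lemma4_aux)
    with \<open>r \<rightarrow>\<^sub>s r'\<close> have "LLam r \<degree>\<degree> ss \<rightarrow>\<^sub>s LLam r' \<degree>\<degree> rs'" by (rule sred.SAbs)
    moreover assume "r'' = LLam r' \<degree>\<degree> rs'"
    ultimately show "LLam r \<degree>\<degree> ss \<rightarrow>\<^sub>s r''" by simp
  next
    fix t u' us'
    assume "ss' = u' # us'"
    with SAbs(3) obtain u us where
      ss: "ss = u # us" and u: "u \<rightarrow>\<^sub>s u'" and us: "us [\<rightarrow>\<^sub>s] us'"
      by cases (auto dest!: listrelp_conj1)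
    have "(lsubst r u 0) \<rightarrow>\<^sub>s (lsubst r' u' 0)" using SAbs(1) and u by (rule lemma3)
    with us have "(lsubst r u 0) \<degree>\<degree> us \<rightarrow>\<^sub>s (lsubst r' u' 0) \<degree>\<degree> us'" by (rule lemma1')
    hence "LLam r \<degree> u \<degree>\<degree> us \<rightarrow>\<^sub>s (lsubst r' u' 0) \<degree>\<degree> us'" by (rule sred.SBeta)
    moreover assume "LLam r' = LLam t" and "r'' = (lsubst t u' 0) \<degree>\<degree> us'"
    ultimately show "LLam r \<degree>\<degree> ss \<rightarrow>\<^sub>s r''" using ss by simp
  qed
next
  case (SBeta r s ss t)
  show ?case
    by (rule sred.SBeta) (rule SBeta)+
qed

lemma rtrancl_beta_sred:
  assumes r: "r \<rightarrow>\<^sub>\<beta>\<^sup>* r'"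
  shows "r \<rightarrow>\<^sub>s r'" using r
  by induct (iprover intro: refl_sred lemma4)+






inductive hstep :: "lterm \<Rightarrow> lterm \<Rightarrow> bool" where
  hred: "hstep (LApp (LLam s) t) (lsubst s t 0)"
| happ: "hstep s s' \<Longrightarrow> (\<forall>b. s \<noteq> LLam b) \<Longrightarrow> hstep (LApp s t) (LApp s' t)"
| habs: "hstep s s' \<Longrightarrow> hstep (LLam s) (LLam s')"

lemma hstep_beta: "hstep t u \<Longrightarrow> beta t u"
  by (induct rule: hstep.induct) (auto intro: beta.intros)

lemma hsteps_betas: "hstep\<^sup>*\<^sup>* t u \<Longrightarrow> beta\<^sup>*\<^sup>* t u"
  by (induct rule: rtranclp_induct) (auto dest: hstep_beta)

lemma hnf_if_head_var: "head_var t \<Longrightarrow> hnf t"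
  by (cases t) auto

lemma hnf_nostep: "hstep t u \<Longrightarrow> \<not> hnf t"
proof (induct rule: hstep.induct)
  case (happ s s' t)
  then have "\<not> head_var s" using hnf_if_head_var by blast
  then show ?case by simp
qed auto

lemma hstep_det: "hstep t u \<Longrightarrow> hstep t v \<Longrightarrow> u = v"
proof (induct arbitrary: v rule: hstep.induct)
  case (hred s t)
  from hred show ?case by (cases rule: hstep.cases) (auto elim: hstep.cases)
next
  case (happ s s' t)
  from happ(4) show ?case
  proof (cases rule: hstep.cases)
    case hred
    then show ?thesis using happ(3) by auto
  next
    case happ
    then show ?thesis using \<open>\<And>v. hstep s v \<Longrightarrow> s' = v\<close> by auto
  qed
next
  case (habs s s')
  from habs(3) show ?case by (cases rule: hstep.cases) (use habs in auto)
qed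

lemma hsteps_abs: "hstep\<^sup>*\<^sup>* s s' \<Longrightarrow> hstep\<^sup>*\<^sup>* (LLam s) (LLam s')"
  by (induct rule: rtranclp_induct) (auto intro: rtranclp.rtrancl_into_rtrancl habs)

lemma hstep_apps: "hstep a b \<Longrightarrow> (\<forall>c. a \<noteq> LLam c) \<Longrightarrow> hstep (a \<degree>\<degree> ss) (b \<degree>\<degree> ss)"
proof (induct ss arbitrary: a b)
  case Nil then show ?case by simp
next
  case (Cons x xs)
  have "hstep (LApp a x) (LApp b x)" using Cons(2,3) by (rule happ)
  then have "hstep (LApp a x \<degree>\<degree> xs) (LApp b x \<degree>\<degree> xs)" using Cons(1) by simp
  then show ?case by simp
qed

lemma head_var_apps: "head_var t \<Longrightarrow> head_var (t \<degree>\<degree> rs)"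
  by (induct rs arbitrary: t) auto

lemma head_var_apps2: "rs \<noteq> [] \<Longrightarrow> head_var (t \<degree>\<degree> rs) = head_var t"
proof (induct rs arbitrary: t)
  case Nil then show ?case by simp
next
  case (Cons x xs)
  then show ?case by (cases "xs = []") auto
qed

lemma listrelp_len: "listrelp R xs ys \<Longrightarrow> length xs = length ys"
  by (induct rule: listrelp.induct) auto

lemma listrelp_Nil2: "listrelp R xs [] \<Longrightarrow> xs = []"
  using listrelp_len by fastforce

lemma sred_hnf: "r \<rightarrow>\<^sub>s r' \<Longrightarrow> hnf r' \<Longrightarrow> \<exists>u. hstep\<^sup>*\<^sup>* r u \<and> hnf u"
proof (induct rule: sred.induct)
  case (SVar rs rs' x)
  have "head_var (LVar x \<degree>\<degree> rs)" by (rule head_var_apps) simp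
  then show ?case using hnf_if_head_var by blast
next
  case (SAbs r r' ss ss')
  have "ss' = []"
  proof (rule ccontr)
    assume "ss' \<noteq> []"
    then have "\<not> head_var (LLam r' \<degree>\<degree> ss')" using head_var_apps2 by simp
    moreover obtain y ys where "ss' = y # ys" using \<open>ss' \<noteq> []\<close> by (cases ss') auto
    then have "hnf (LLam r' \<degree>\<degree> ss') = head_var (LLam r' \<degree>\<degree> ss')"
      by (induct ys arbitrary: y rule: rev_induct) auto
    ultimately show False using SAbs(4) by simp
  qed
  moreover have "ss = []" using SAbs(3) \<open>ss' = []\<close>
    by (auto dest: listrelp_Nil2)
  ultimately show ?case using SAbs(2,4) hsteps_abs by fastforce
next
  case (SBeta r s ss t)
  then obtain u where u: "hstep\<^sup>*\<^sup>* (lsubst r s 0 \<degree>\<degree> ss) u" "hnf u" by blast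
  have "hstep (LLam r \<degree> s \<degree>\<degree> ss) (lsubst r s 0 \<degree>\<degree> ss)"
    by (rule hstep_apps) (auto intro: hred)
  then show ?case using u by (meson converse_rtranclp_into_rtranclp)
qed

lemma solvable_hnorm: "solvable t \<Longrightarrow> \<exists>v. hstep\<^sup>*\<^sup>* t v \<and> hnf v"
proof -
  assume "solvable t"
  then obtain u where u: "equivclp beta t u" "hnf u" unfolding solvable_def by blast
  then obtain d where d: "beta\<^sup>*\<^sup>* t d" "beta\<^sup>*\<^sup>* u d" using beta_CR by blast
  then have "hnf d" using u hnf_betas by blast
  from rtrancl_beta_sred[OF d(1)] have "t \<rightarrow>\<^sub>s d" .
  then show ?thesis using sred_hnf \<open>hnf d\<close> by blast
qed

definition hn :: "lterm \<Rightarrow> nat \<Rightarrow> bool" where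
  "hn t n \<longleftrightarrow> (\<exists>u. (hstep ^^ n) t u \<and> hnf u)"

lemma pow_det: "(hstep ^^ n) t u \<Longrightarrow> (hstep ^^ m) t v \<Longrightarrow> n \<le> m \<Longrightarrow> (hstep ^^ (m - n)) u v"
proof (induct n arbitrary: t m)
  case 0 then show ?case by simp
next
  case (Suc n)
  from Suc(2) obtain t1 where t1: "hstep t t1" "(hstep ^^ n) t1 u" by (metis relpowp_Suc_D2)
  from Suc(4) obtain m' where m: "m = Suc m'" by (cases m) auto
  from Suc(3) m obtain t2 where t2: "hstep t t2" "(hstep ^^ m') t2 v" by (metis relpowp_Suc_D2)
  have "t1 = t2" using t1 t2 hstep_det by blast
  then show ?case using Suc(1)[OF t1(2)] t2 m Suc(4) by auto
qed

lemma hnf_pow: "hnf u \<Longrightarrow> (hstep ^^ k) u v \<Longrightarrow> k = 0"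
proof (cases k)
  case (Suc k')
  assume "hnf u" "(hstep ^^ k) u v"
  then obtain y where "hstep u y" using Suc by (metis relpowp_Suc_D2)
  then show ?thesis using hnf_nostep \<open>hnf u\<close> by blast
qed simp

definition jn :: "lterm \<Rightarrow> lterm \<Rightarrow> bool \<Rightarrow> bool" where
  "jn t u d \<longleftrightarrow> (\<exists>X a b. (hstep ^^ a) t X \<and> (hstep ^^ b) u X \<and> (b < a \<or> (b = a \<and> d)))"

lemma jn_hn: "jn t u d \<Longrightarrow> hn t n \<Longrightarrow> \<exists>m. hn u m \<and> (m < n \<or> (m = n \<and> d))"
proof -
  assume "jn t u d" "hn t n"
  then obtain X a b where X: "(hstep ^^ a) t X" "(hstep ^^ b) u X" "b < a \<or> (b = a \<and> d)"
    unfolding jn_def by blast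
  from \<open>hn t n\<close> obtain w where w: "(hstep ^^ n) t w" "hnf w" unfolding hn_def by blast
  have "a \<le> n"
  proof (rule ccontr)
    assume "\<not> a \<le> n"
    then have "(hstep ^^ (a - n)) w X" using pow_det[OF w(1) X(1)] by simp
    then have "a - n = 0" using hnf_pow w(2) by blast
    then show False using \<open>\<not> a \<le> n\<close> by simp
  qed
  then have "(hstep ^^ (n - a)) X w" using pow_det[OF X(1) w(1)] by simp
  then have "(hstep ^^ (b + (n - a))) u w" using X(2) by (simp add: relpowp_add relcomppI)
  then have "hn u (b + (n - a))" using w(2) unfolding hn_def by blast
  then show ?thesis using X(3) \<open>a \<le> n\<close> by (intro exI[of _ "b + (n - a)"]) auto
qed

lemma hn_unique: "hn t n \<Longrightarrow> hn t m \<Longrightarrow> n = m"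
proof -
  assume "hn t n" "hn t m"
  then obtain u v where u: "(hstep ^^ n) t u" "hnf u" and v: "(hstep ^^ m) t v" "hnf v"
    unfolding hn_def by blast
  show "n = m"
  proof (cases "n \<le> m")
    case True
    then have "m - n = 0" using pow_det[OF u(1) v(1)] hnf_pow u(2) by blast
    then show ?thesis using True by simp
  next
    case False
    then have "m \<le> n" by simp
    then have "n - m = 0" using hnf_pow[OF v(2) pow_det[OF v(1) u(1)]] by simp
    then show ?thesis using False by simp
  qed
qed

lemma pow_betas: "(hstep ^^ a) t X \<Longrightarrow> beta\<^sup>*\<^sup>* t X"
  by (rule hsteps_betas) (rule relpowp_imp_rtranclp)

lemma jn_equiv: "jn t u d \<Longrightarrow> equivclp beta t u"
proof -
  assume "jn t u d"
  then obtain X a b where X: "(hstep ^^ a) t X" "(hstep ^^ b) u X" unfolding jn_def by blast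
  have "equivclp beta t X" by (rule predicate2D[OF rtranlcp_le_equivclp pow_betas[OF X(1)]])
  moreover have "equivclp beta u X" by (rule predicate2D[OF rtranlcp_le_equivclp pow_betas[OF X(2)]])
  then have "equivclp beta X u" by (rule equivclp_sym)
  ultimately show ?thesis by (rule equivclp_trans)
qed

lemma jn_weaken: "jn t u d \<Longrightarrow> (d \<Longrightarrow> d') \<Longrightarrow> jn t u d'"
  unfolding jn_def by blast

lemma jn_eq: "d \<Longrightarrow> jn t t d"
  unfolding jn_def by (rule exI[of _ t], rule exI[of _ 0], rule exI[of _ 0]) auto

lemma pow_abs: "(hstep ^^ a) t X \<Longrightarrow> (hstep ^^ a) (LLam t) (LLam X)"
proof (induct a arbitrary: t)
  case (Suc a)
  then obtain t1 where "hstep t t1" "(hstep ^^ a) t1 X" by (metis relpowp_Suc_D2)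
  then show ?case using Suc(1) habs relpowp_Suc_I2 by metis
qed simp

lemma jn_abs: "jn t u d \<Longrightarrow> jn (LLam t) (LLam u) d"
  unfolding jn_def using pow_abs by blast

lemma jn_pre: "hstep t t1 \<Longrightarrow> hstep u u1 \<Longrightarrow> jn t1 u1 d \<Longrightarrow> jn t u d"
proof -
  assume h: "hstep t t1" "hstep u u1" "jn t1 u1 d"
  then obtain X a b where X: "(hstep ^^ a) t1 X" "(hstep ^^ b) u1 X" "b < a \<or> (b = a \<and> d)"
    unfolding jn_def by blast
  have "(hstep ^^ Suc a) t X" using h(1) X(1) by (rule relpowp_Suc_I2)
  moreover have "(hstep ^^ Suc b) u X" using h(2) X(2) by (rule relpowp_Suc_I2)
  ultimately show ?thesis unfolding jn_def using X(3) by (intro exI[of _ X] exI[of _ "Suc a"] exI[of _ "Suc b"]) auto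
qed

lemma jn_preL: "hstep t t1 \<Longrightarrow> jn t1 u d \<Longrightarrow> jn t u d'"
proof -
  assume h: "hstep t t1" "jn t1 u d"
  then obtain X a b where X: "(hstep ^^ a) t1 X" "(hstep ^^ b) u X" "b < a \<or> (b = a \<and> d)"
    unfolding jn_def by blast
  have "(hstep ^^ Suc a) t X" using h(1) X(1) by (rule relpowp_Suc_I2)
  then show ?thesis unfolding jn_def using X(2,3) by (intro exI[of _ X] exI[of _ "Suc a"] exI[of _ b]) auto
qed

lemma jn_post: "jn t u d \<Longrightarrow> hstep u u' \<Longrightarrow> jn t u' d'"
proof -
  assume "jn t u d" "hstep u u'"
  then obtain X a b where X: "(hstep ^^ a) t X" "(hstep ^^ b) u X" "b < a \<or> (b = a \<and> d)"
    unfolding jn_def by blast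
  show ?thesis
  proof (cases b)
    case 0
    then have "X = u" using X(2) by simp
    then have "(hstep ^^ Suc a) t u'" using X(1) \<open>hstep u u'\<close> by (meson relpowp_Suc_I)
    moreover have "(hstep ^^ 0) u' u'" by simp
    ultimately show ?thesis unfolding jn_def by (intro exI[of _ u'] exI[of _ "Suc a"] exI[of _ 0]) auto
  next
    case (Suc b')
    then obtain u2 where "hstep u u2" "(hstep ^^ b') u2 X" using X(2) by (metis relpowp_Suc_D2)
    then have "u2 = u'" using \<open>hstep u u'\<close> hstep_det by blast
    then have "(hstep ^^ b') u' X" using \<open>(hstep ^^ b') u2 X\<close> by simp
    moreover have "b' < a" using X(3) Suc by auto
    ultimately show ?thesis unfolding jn_def using X(1) by (intro exI[of _ X] exI[of _ a] exI[of _ b']) auto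
  qed
qed




declare lift_subst [simp del]

abbreviation liftE :: "nat \<Rightarrow> (nat \<Rightarrow> lterm) \<Rightarrow> nat \<Rightarrow> lterm" where
  "liftE j \<sigma> \<equiv> (\<lambda>n. lift j (\<sigma> n))"
definition scons :: "lterm \<Rightarrow> (nat \<Rightarrow> lterm) \<Rightarrow> nat \<Rightarrow> lterm" where
  "scons a \<sigma> = (\<lambda>n. case n of 0 \<Rightarrow> a | Suc m \<Rightarrow> \<sigma> m)"

abbreviation upo :: "(nat \<Rightarrow> lterm) \<Rightarrow> nat \<Rightarrow> lterm" where
  "upo \<sigma> \<equiv> scons (LVar 0) (liftE 0 \<sigma>)"

lemma scons_0 [simp]: "scons a \<sigma> 0 = a" by (simp add: scons_def)
lemma scons_Suc [simp]: "scons a \<sigma> (Suc m) = \<sigma> m" by (simp add: scons_def)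
lemma scons_apply: "scons a \<sigma> n = (case n of 0 \<Rightarrow> a | Suc m \<Rightarrow> \<sigma> m)" by (simp add: scons_def)

lemma lift_lift0 [simp]: "lift (Suc j) (lift 0 t) = lift 0 (lift j t)"
  using lift_lift[of 0 j t] by simp

lemma subst_lift0 [simp]: "lsubst (lift 0 t) (lift 0 s) (Suc j) = lift 0 (lsubst t s j)"
  using lift_subst_lt[of 0 j t s] by simp

fun cpsT :: "(nat \<Rightarrow> lterm) \<Rightarrow> (nat \<Rightarrow> lterm) \<Rightarrow> trm \<Rightarrow> lterm \<Rightarrow> lterm"
and cpsJ :: "(nat \<Rightarrow> lterm) \<Rightarrow> (nat \<Rightarrow> lterm) \<Rightarrow> jmp \<Rightarrow> lterm"
and vsT :: "(nat \<Rightarrow> lterm) \<Rightarrow> (nat \<Rightarrow> lterm) \<Rightarrow> trm \<Rightarrow> lterm" where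
  "vsT \<sigma> \<kappa> (Var n) = \<sigma> n"
| "vsT \<sigma> \<kappa> (Lam M) = LLam (LLam (cpsT (liftE 0 (upo \<sigma>)) (liftE 0 (liftE 0 \<kappa>)) M (LVar 0)))"
| "vsT \<sigma> \<kappa> (App s t) = LVar 0"
| "vsT \<sigma> \<kappa> (Where s t) = LVar 0"
| "vsT \<sigma> \<kappa> (Mu J) = LVar 0"
| "cpsT \<sigma> \<kappa> (Var n) K = LApp K (vsT \<sigma> \<kappa> (Var n))"
| "cpsT \<sigma> \<kappa> (Lam M) K = LApp K (vsT \<sigma> \<kappa> (Lam M))"
| "cpsT \<sigma> \<kappa> (App s t) K =
     (if is_val s \<and> is_val t then LApp (LApp (vsT \<sigma> \<kappa> s) (vsT \<sigma> \<kappa> t)) K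
      else if is_val s then
        cpsT \<sigma> \<kappa> t (LLam (LApp (LApp (vsT (liftE 0 \<sigma>) (liftE 0 \<kappa>) s) (LVar 0)) (lift 0 K)))
      else if is_val t then
        cpsT \<sigma> \<kappa> s (LLam (LApp (LApp (LVar 0) (vsT (liftE 0 \<sigma>) (liftE 0 \<kappa>) t)) (lift 0 K)))
      else
        cpsT \<sigma> \<kappa> s (LLam (cpsT (liftE 0 \<sigma>) (liftE 0 \<kappa>) t
           (LLam (LApp (LApp (LVar 1) (LVar 0)) (lift 0 (lift 0 K)))))))"
| "cpsT \<sigma> \<kappa> (Where L M) K = cpsT \<sigma> \<kappa> M (LLam (cpsT (upo \<sigma>) (liftE 0 \<kappa>) L (lift 0 K)))"
| "cpsT \<sigma> \<kappa> (Mu J) K = LApp (LLam (cpsJ (liftE 0 \<sigma>) (upo \<kappa>) J)) K"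
| "cpsJ \<sigma> \<kappa> (Jump k M) = cpsT \<sigma> \<kappa> M (\<kappa> k)"

lemma scons_LV [simp]: "scons (LVar 0) (\<lambda>n. LVar (Suc (f n))) = (\<lambda>n. LVar (ext f n))"
  by (rule ext) (simp add: ext_def split: nat.split)

lemma cps_cpsT:
  "cps ro rk M K = cpsT (\<lambda>n. LVar (ro n)) (\<lambda>n. LVar (rk n)) M K"
  "cpsj ro rk J = cpsJ (\<lambda>n. LVar (ro n)) (\<lambda>n. LVar (rk n)) J"
  "vstar ro rk M = vsT (\<lambda>n. LVar (ro n)) (\<lambda>n. LVar (rk n)) M"
  by (induct ro rk M K and ro rk J and ro rk M rule: cps_cpsj_vstar.induct)
     (simp_all add: o_def)

lemma is_val_omap [simp]: "is_val (omap f M) = is_val M" by (cases M) auto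
lemma is_val_kmap [simp]: "is_val (kmap f M) = is_val M" by (cases M) auto
lemma is_val_cs [simp]: "is_val (cs N k M) = is_val M" by (cases M) auto
lemma is_val_osub [simp]: "(\<forall>n. is_val (\<tau> n)) \<Longrightarrow> is_val (osub \<tau> M) = is_val M" by (cases M) auto

lemma cpsT_cong: "\<sigma> = \<sigma>' \<Longrightarrow> \<kappa> = \<kappa>' \<Longrightarrow> K = K' \<Longrightarrow> cpsT \<sigma> \<kappa> M K = cpsT \<sigma>' \<kappa>' M K'" by simp
lemma cpsJ_cong: "\<sigma> = \<sigma>' \<Longrightarrow> \<kappa> = \<kappa>' \<Longrightarrow> cpsJ \<sigma> \<kappa> J = cpsJ \<sigma>' \<kappa>' J" by simp
lemma vsT_cong: "\<sigma> = \<sigma>' \<Longrightarrow> \<kappa> = \<kappa>' \<Longrightarrow> vsT \<sigma> \<kappa> M = vsT \<sigma>' \<kappa>' M" by simp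


lemma cps_lift:
  "lift j (cpsT \<sigma> \<kappa> M K) = cpsT (liftE j \<sigma>) (liftE j \<kappa>) M (lift j K)"
  "lift j (cpsJ \<sigma> \<kappa> J) = cpsJ (liftE j \<sigma>) (liftE j \<kappa>) J"
  "is_val M \<Longrightarrow> lift j (vsT \<sigma> \<kappa> M) = vsT (liftE j \<sigma>) (liftE j \<kappa>) M"
  by (induct \<sigma> \<kappa> M K and \<sigma> \<kappa> J and \<sigma> \<kappa> M arbitrary: j and j and j rule: cpsT_cpsJ_vsT.induct)
     (auto intro!: cpsT_cong cpsJ_cong vsT_cong simp: fun_eq_iff scons_apply split: nat.split)

lemma cps_subst:
  "lsubst (cpsT \<sigma> \<kappa> M K) s j = cpsT (\<lambda>n. lsubst (\<sigma> n) s j) (\<lambda>n. lsubst (\<kappa> n) s j) M (lsubst K s j)"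
  "lsubst (cpsJ \<sigma> \<kappa> J) s j = cpsJ (\<lambda>n. lsubst (\<sigma> n) s j) (\<lambda>n. lsubst (\<kappa> n) s j) J"
  "is_val M \<Longrightarrow> lsubst (vsT \<sigma> \<kappa> M) s j = vsT (\<lambda>n. lsubst (\<sigma> n) s j) (\<lambda>n. lsubst (\<kappa> n) s j) M"
  by (induct \<sigma> \<kappa> M K and \<sigma> \<kappa> J and \<sigma> \<kappa> M arbitrary: s j and s j and s j rule: cpsT_cpsJ_vsT.induct)
     (auto intro!: cpsT_cong cpsJ_cong vsT_cong simp: fun_eq_iff scons_apply split: nat.split)

lemma vsT_lift: "is_val M \<Longrightarrow> vsT (liftE j \<sigma>) (liftE j \<kappa>) M = lift j (vsT \<sigma> \<kappa> M)"
  by (simp add: cps_lift)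

lemma cps_omap:
  "\<forall>\<sigma> \<kappa> K f. cpsT \<sigma> \<kappa> (omap f M) K = cpsT (\<lambda>n. \<sigma> (f n)) \<kappa> M K \<and> vsT \<sigma> \<kappa> (omap f M) = vsT (\<lambda>n. \<sigma> (f n)) \<kappa> M"
  "\<forall>\<sigma> \<kappa> f. cpsJ \<sigma> \<kappa> (omapj f J) = cpsJ (\<lambda>n. \<sigma> (f n)) \<kappa> J"
  by (induct M and J) (auto intro!: cpsT_cong cpsJ_cong vsT_cong simp: fun_eq_iff scons_apply ext_def split: nat.split)

lemma cps_kmap:
  "\<forall>\<sigma> \<kappa> K f. cpsT \<sigma> \<kappa> (kmap f M) K = cpsT \<sigma> (\<lambda>n. \<kappa> (f n)) M K \<and> vsT \<sigma> \<kappa> (kmap f M) = vsT \<sigma> (\<lambda>n. \<kappa> (f n)) M"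
  "\<forall>\<sigma> \<kappa> f. cpsJ \<sigma> \<kappa> (kmapj f J) = cpsJ \<sigma> (\<lambda>n. \<kappa> (f n)) J"
  by (induct M and J) (auto intro!: cpsT_cong cpsJ_cong vsT_cong simp: fun_eq_iff scons_apply ext_def split: nat.split)

lemma vsT_omap [simp]: "vsT \<sigma> \<kappa> (omap f M) = vsT (\<lambda>n. \<sigma> (f n)) \<kappa> M"
  using cps_omap(1) by blast
lemma cpsT_omap [simp]: "cpsT \<sigma> \<kappa> (omap f M) K = cpsT (\<lambda>n. \<sigma> (f n)) \<kappa> M K"
  using cps_omap(1) by blast
lemma cpsJ_omap [simp]: "cpsJ \<sigma> \<kappa> (omapj f J) = cpsJ (\<lambda>n. \<sigma> (f n)) \<kappa> J"
  using cps_omap(2) by blast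
lemma vsT_kmap [simp]: "vsT \<sigma> \<kappa> (kmap f M) = vsT \<sigma> (\<lambda>n. \<kappa> (f n)) M"
  using cps_kmap(1) by blast
lemma cpsT_kmap [simp]: "cpsT \<sigma> \<kappa> (kmap f M) K = cpsT \<sigma> (\<lambda>n. \<kappa> (f n)) M K"
  using cps_kmap(1) by blast
lemma cpsJ_kmap [simp]: "cpsJ \<sigma> \<kappa> (kmapj f J) = cpsJ \<sigma> (\<lambda>n. \<kappa> (f n)) J"
  using cps_kmap(2) by blast

lemma cpsT_val [simp]: "is_val V \<Longrightarrow> cpsT \<sigma> \<kappa> V K = LApp K (vsT \<sigma> \<kappa> V)"
  by (cases V) auto

lemma is_val_exts [simp]: "(\<forall>n. is_val (\<tau> n)) \<Longrightarrow> is_val (exts \<tau> n)"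
  by (cases n) (auto simp: exts_def)

lemma cps_osub:
  "\<forall>\<sigma> \<kappa> K \<tau>. (\<forall>n. is_val (\<tau> n)) \<longrightarrow> cpsT \<sigma> \<kappa> (osub \<tau> M) K = cpsT (\<lambda>n. vsT \<sigma> \<kappa> (\<tau> n)) \<kappa> M K
      \<and> vsT \<sigma> \<kappa> (osub \<tau> M) = vsT (\<lambda>n. vsT \<sigma> \<kappa> (\<tau> n)) \<kappa> M"
  "\<forall>\<sigma> \<kappa> \<tau>. (\<forall>n. is_val (\<tau> n)) \<longrightarrow> cpsJ \<sigma> \<kappa> (osubj \<tau> J) = cpsJ (\<lambda>n. vsT \<sigma> \<kappa> (\<tau> n)) \<kappa> J"
  by (induct M and J) (auto intro!: cpsT_cong cpsJ_cong vsT_cong simp: fun_eq_iff exts_def vsT_lift split: nat.split)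

definition csX :: "(nat \<Rightarrow> lterm) \<Rightarrow> (nat \<Rightarrow> lterm) \<Rightarrow> trm \<Rightarrow> nat \<Rightarrow> lterm" where
  "csX \<sigma> \<kappa> N k = LLam (cpsT (upo \<sigma>) (liftE 0 \<kappa>) N (lift 0 (\<kappa> k)))"

lemma lift_csX [simp]: "lift 0 (csX \<sigma> \<kappa> N k) = csX (liftE 0 \<sigma>) (liftE 0 \<kappa>) N k"
  unfolding csX_def by (auto simp: cps_lift intro!: cpsT_cong simp: fun_eq_iff scons_apply split: nat.split)

lemma csX_where [simp]: "csX (upo \<sigma>) (liftE 0 \<kappa>) (omap (ext Suc) N) k = csX (liftE 0 \<sigma>) (liftE 0 \<kappa>) N k"
  unfolding csX_def by (auto intro!: cpsT_cong simp: fun_eq_iff ext_def split: nat.split)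

lemma csX_lam [simp]: "csX (liftE 0 (upo \<sigma>)) (liftE 0 (liftE 0 \<kappa>)) (omap (ext Suc) N) k
   = csX (liftE 0 (liftE 0 \<sigma>)) (liftE 0 (liftE 0 \<kappa>)) N k"
  unfolding csX_def by (auto intro!: cpsT_cong simp: fun_eq_iff ext_def split: nat.split)

lemma csX_lam' [simp]: "csX (liftE 0 (case_nat (LVar 0) (liftE 0 \<sigma>))) (liftE 0 (liftE 0 \<kappa>)) (omap (ext Suc) N) k
   = csX (liftE 0 (liftE 0 \<sigma>)) (liftE 0 (liftE 0 \<kappa>)) N k"
  using csX_lam[of \<sigma> \<kappa> N k] by (simp add: scons_def)

lemma csX_mu [simp]: "csX (liftE 0 \<sigma>) (upo \<kappa>) (kmap Suc N) (Suc k) = csX (liftE 0 \<sigma>) (liftE 0 \<kappa>) N k"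
  unfolding csX_def by (auto intro!: cpsT_cong simp: fun_eq_iff split: nat.split)

lemma cps_cs:
  "\<forall>\<sigma> \<kappa> K N k. cpsT \<sigma> \<kappa> (cs N k Q) K = cpsT \<sigma> (\<kappa>(k := csX \<sigma> \<kappa> N k)) Q K
      \<and> vsT \<sigma> \<kappa> (cs N k Q) = vsT \<sigma> (\<kappa>(k := csX \<sigma> \<kappa> N k)) Q"
  "\<forall>\<sigma> \<kappa> N k. cpsJ \<sigma> \<kappa> (csj N k J) = cpsJ \<sigma> (\<kappa>(k := csX \<sigma> \<kappa> N k)) J"
  by (induct Q and J) (auto intro!: cpsT_cong cpsJ_cong vsT_cong simp: fun_eq_iff scons_apply csX_def[symmetric] split: nat.split)




fun adm :: "trm \<Rightarrow> nat" where
  "adm (App L M) = (if is_val L then 2 + adm M else 2 + adm L)"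
| "adm (Where L M) = 1 + adm M"
| "adm _ = 0"

lemma E0_nonval: "E0 P P' \<Longrightarrow> \<not> is_val P"
  by (induct rule: E0.induct) auto

lemma hstep_redex2: "hstep (LApp (LApp (LLam A) v) K) (LApp (lsubst A v 0) K)"
  by (rule happ[OF hred]) simp

lemma E0_sim: "E0 P P' \<Longrightarrow> jn (cpsT \<sigma> \<kappa> P K) (cpsT \<sigma> \<kappa> P' K) (adm P' < adm P)"
proof (induct arbitrary: \<sigma> \<kappa> K rule: E0.induct)
  case (mu_app J M)
  have "cpsT \<sigma> \<kappa> (App (Mu J) M) K = cpsT \<sigma> \<kappa> (Where (App (Var 0) (omap Suc M)) (Mu J)) K"
    by (cases "is_val M") (auto intro!: cpsT_cong cpsJ_cong vsT_cong simp: fun_eq_iff scons_apply split: nat.split)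
  then show ?case by (auto intro: jn_eq)
next
  case (app_mu V J)
  have "cpsT \<sigma> \<kappa> (App V (Mu J)) K = cpsT \<sigma> \<kappa> (Where (App (omap Suc V) (Var 0)) (Mu J)) K"
    using app_mu by (auto intro!: cpsT_cong cpsJ_cong vsT_cong simp: fun_eq_iff scons_apply split: nat.split)
  then show ?case using app_mu by (auto intro: jn_eq)
next
  case (beta_v V M)
  define B where "B = cpsT (liftE 0 (upo \<sigma>)) (liftE 0 (liftE 0 \<kappa>)) M (LVar 0)"
  define C where "C = cpsT (upo \<sigma>) (liftE 0 \<kappa>) M (lift 0 K)"
  have L: "cpsT \<sigma> \<kappa> (App (Lam M) V) K = LApp (LApp (LLam (LLam B)) (vsT \<sigma> \<kappa> V)) K"
    using beta_v by (simp add: B_def)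
  have R: "cpsT \<sigma> \<kappa> (Where M V) K = LApp (LLam C) (vsT \<sigma> \<kappa> V)"
    using beta_v by (simp add: C_def)
  have s1: "hstep (LApp (LApp (LLam (LLam B)) (vsT \<sigma> \<kappa> V)) K)
     (LApp (LLam (lsubst B (lift 0 (vsT \<sigma> \<kappa> V)) (Suc 0))) K)"
    using hstep_redex2[of "LLam B" "vsT \<sigma> \<kappa> V" K] by simp
  have s2: "hstep (LApp (LLam (lsubst B (lift 0 (vsT \<sigma> \<kappa> V)) (Suc 0))) K)
     (lsubst (lsubst B (lift 0 (vsT \<sigma> \<kappa> V)) (Suc 0)) K 0)" by (rule hred)
  have s3: "hstep (LApp (LLam C) (vsT \<sigma> \<kappa> V)) (lsubst C (vsT \<sigma> \<kappa> V) 0)" by (rule hred)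
  have eq: "lsubst (lsubst B (lift 0 (vsT \<sigma> \<kappa> V)) (Suc 0)) K 0 = lsubst C (vsT \<sigma> \<kappa> V) 0"
    unfolding B_def C_def
    by (auto simp: cps_subst intro!: cpsT_cong simp: fun_eq_iff scons_apply split: nat.split)
  have "jn (LApp (LLam (lsubst B (lift 0 (vsT \<sigma> \<kappa> V)) (Suc 0))) K) (LApp (LLam C) (vsT \<sigma> \<kappa> V)) True"
    using jn_pre[OF s2 s3] eq jn_eq by simp
  then show ?case unfolding L R by (rule jn_preL[OF s1])
next
  case (where_v V M)
  define C where "C = cpsT (upo \<sigma>) (liftE 0 \<kappa>) M (lift 0 K)"
  have R: "cpsT \<sigma> \<kappa> (Where M V) K = LApp (LLam C) (vsT \<sigma> \<kappa> V)"
    using where_v by (simp add: C_def)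
  have s3: "hstep (LApp (LLam C) (vsT \<sigma> \<kappa> V)) (lsubst C (vsT \<sigma> \<kappa> V) 0)" by (rule hred)
  have vals: "\<forall>n. is_val (case n of 0 \<Rightarrow> V | Suc m \<Rightarrow> Var m)"
    using where_v by (auto split: nat.split)
  have eq: "lsubst C (vsT \<sigma> \<kappa> V) 0 = cpsT \<sigma> \<kappa> (subst0 M V) K"
    unfolding C_def subst0_def using cps_osub(1)[of M] vals
    by (auto simp: cps_subst intro!: cpsT_cong simp: fun_eq_iff scons_apply split: nat.split)
  have "jn (lsubst C (vsT \<sigma> \<kappa> V) 0) (cpsT \<sigma> \<kappa> (subst0 M V) K) True"
    using eq jn_eq by simp
  then show ?case unfolding R by (rule jn_preL[OF s3])
next
  case (where_mu M J)
  define K1 where "K1 = LLam (cpsT (upo \<sigma>) (liftE 0 \<kappa>) M (lift 0 K))"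
  have L: "cpsT \<sigma> \<kappa> (Where M (Mu J)) K = LApp (LLam (cpsJ (liftE 0 \<sigma>) (upo \<kappa>) J)) K1"
    by (simp add: K1_def)
  have R: "cpsT \<sigma> \<kappa> (Mu (csj (kmap Suc M) 0 J)) K
     = LApp (LLam (cpsJ (liftE 0 \<sigma>) (upo \<kappa>) (csj (kmap Suc M) 0 J))) K" by simp
  have eq: "lsubst (cpsJ (liftE 0 \<sigma>) (upo \<kappa>) J) K1 0
     = lsubst (cpsJ (liftE 0 \<sigma>) (upo \<kappa>) (csj (kmap Suc M) 0 J)) K 0"
    unfolding K1_def using cps_cs(2)[of "csj (kmap Suc M) 0 J" for J]
    by (auto simp: cps_subst cps_cs(2) csX_def intro!: cpsJ_cong cpsT_cong simp: fun_eq_iff scons_apply split: nat.split)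
  have "jn (LApp (LLam (cpsJ (liftE 0 \<sigma>) (upo \<kappa>) J)) K1)
     (LApp (LLam (cpsJ (liftE 0 \<sigma>) (upo \<kappa>) (csj (kmap Suc M) 0 J))) K) True"
    by (rule jn_pre[OF hred hred]) (simp add: eq jn_eq)
  then show ?case unfolding L R by (rule jn_weaken) simp
next
  case (ctx_argR V L L')
  define K' where "K' = LLam (LApp (LApp (vsT (liftE 0 \<sigma>) (liftE 0 \<kappa>) V) (LVar 0)) (lift 0 K))"
  have nv: "\<not> is_val L" using ctx_argR E0_nonval by blast
  have L: "cpsT \<sigma> \<kappa> (App V L) K = cpsT \<sigma> \<kappa> L K'" using nv ctx_argR by (simp add: K'_def)
  have IH: "jn (cpsT \<sigma> \<kappa> L K') (cpsT \<sigma> \<kappa> L' K') (adm L' < adm L)" by (rule ctx_argR(3))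
  show ?case
  proof (cases "is_val L'")
    case False
    then have "cpsT \<sigma> \<kappa> (App V L') K = cpsT \<sigma> \<kappa> L' K'" using ctx_argR by (simp add: K'_def)
    then show ?thesis using IH L nv ctx_argR(1) by (auto intro: jn_weaken)
  next
    case True
    have e: "cpsT \<sigma> \<kappa> L' K' = LApp K' (vsT \<sigma> \<kappa> L')" using True by simp
    have "hstep (LApp K' (vsT \<sigma> \<kappa> L')) (lsubst (LApp (LApp (vsT (liftE 0 \<sigma>) (liftE 0 \<kappa>) V) (LVar 0)) (lift 0 K)) (vsT \<sigma> \<kappa> L') 0)"
      unfolding K'_def by (rule hred)
    then have "hstep (cpsT \<sigma> \<kappa> L' K') (lsubst (LApp (LApp (vsT (liftE 0 \<sigma>) (liftE 0 \<kappa>) V) (LVar 0)) (lift 0 K)) (vsT \<sigma> \<kappa> L') 0)"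
      by (simp only: e)
    moreover have "lsubst (LApp (LApp (vsT (liftE 0 \<sigma>) (liftE 0 \<kappa>) V) (LVar 0)) (lift 0 K)) (vsT \<sigma> \<kappa> L') 0
       = cpsT \<sigma> \<kappa> (App V L') K"
      using True ctx_argR(1) by (simp add: vsT_lift)
    ultimately show ?thesis unfolding L using jn_post[OF IH] by simp
  qed
next
  case (ctx_funL L L' M)
  have nv: "\<not> is_val L" using ctx_funL E0_nonval by blast
  show ?case
  proof (cases "is_val M")
    case True
    define K' where "K' = LLam (LApp (LApp (LVar 0) (vsT (liftE 0 \<sigma>) (liftE 0 \<kappa>) M)) (lift 0 K))"
    have L: "cpsT \<sigma> \<kappa> (App L M) K = cpsT \<sigma> \<kappa> L K'" using nv True by (simp add: K'_def)
    have IH: "jn (cpsT \<sigma> \<kappa> L K') (cpsT \<sigma> \<kappa> L' K') (adm L' < adm L)" by (rule ctx_funL(2))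
    show ?thesis
    proof (cases "is_val L'")
      case False
      then have "cpsT \<sigma> \<kappa> (App L' M) K = cpsT \<sigma> \<kappa> L' K'" using True by (simp add: K'_def)
      then show ?thesis using IH L nv False by (auto intro: jn_weaken)
    next
      case True2: True
      have e: "cpsT \<sigma> \<kappa> L' K' = LApp K' (vsT \<sigma> \<kappa> L')" using True2 by simp
      have "hstep (LApp K' (vsT \<sigma> \<kappa> L')) (lsubst (LApp (LApp (LVar 0) (vsT (liftE 0 \<sigma>) (liftE 0 \<kappa>) M)) (lift 0 K)) (vsT \<sigma> \<kappa> L') 0)"
        unfolding K'_def by (rule hred)
      then have "hstep (cpsT \<sigma> \<kappa> L' K') (lsubst (LApp (LApp (LVar 0) (vsT (liftE 0 \<sigma>) (liftE 0 \<kappa>) M)) (lift 0 K)) (vsT \<sigma> \<kappa> L') 0)"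
        by (simp only: e)
      moreover have "lsubst (LApp (LApp (LVar 0) (vsT (liftE 0 \<sigma>) (liftE 0 \<kappa>) M)) (lift 0 K)) (vsT \<sigma> \<kappa> L') 0
         = cpsT \<sigma> \<kappa> (App L' M) K"
        using True True2 by (simp add: vsT_lift)
      ultimately show ?thesis unfolding L using jn_post[OF IH] by simp
    qed
  next
    case False
    define K' where "K' = LLam (cpsT (liftE 0 \<sigma>) (liftE 0 \<kappa>) M (LLam (LApp (LApp (LVar 1) (LVar 0)) (lift 0 (lift 0 K)))))"
    have L: "cpsT \<sigma> \<kappa> (App L M) K = cpsT \<sigma> \<kappa> L K'" using nv False by (simp add: K'_def)
    have IH: "jn (cpsT \<sigma> \<kappa> L K') (cpsT \<sigma> \<kappa> L' K') (adm L' < adm L)" by (rule ctx_funL(2))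
    show ?thesis
    proof (cases "is_val L'")
      case False2: False
      then have "cpsT \<sigma> \<kappa> (App L' M) K = cpsT \<sigma> \<kappa> L' K'" using False by (simp add: K'_def)
      then show ?thesis using IH L nv False2 by (auto intro: jn_weaken)
    next
      case True2: True
      have e: "cpsT \<sigma> \<kappa> L' K' = LApp K' (vsT \<sigma> \<kappa> L')" using True2 by simp
      have "hstep (LApp K' (vsT \<sigma> \<kappa> L')) (lsubst (cpsT (liftE 0 \<sigma>) (liftE 0 \<kappa>) M (LLam (LApp (LApp (LVar 1) (LVar 0)) (lift 0 (lift 0 K))))) (vsT \<sigma> \<kappa> L') 0)"
        unfolding K'_def by (rule hred)
      then have "hstep (cpsT \<sigma> \<kappa> L' K') (lsubst (cpsT (liftE 0 \<sigma>) (liftE 0 \<kappa>) M (LLam (LApp (LApp (LVar 1) (LVar 0)) (lift 0 (lift 0 K))))) (vsT \<sigma> \<kappa> L') 0)"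
        by (simp only: e)
      moreover have "lsubst (cpsT (liftE 0 \<sigma>) (liftE 0 \<kappa>) M (LLam (LApp (LApp (LVar 1) (LVar 0)) (lift 0 (lift 0 K))))) (vsT \<sigma> \<kappa> L') 0
          = cpsT \<sigma> \<kappa> (App L' M) K"
        using True2 False by (auto simp: cps_subst vsT_lift intro!: cpsT_cong simp: fun_eq_iff)
      ultimately show ?thesis unfolding L using jn_post[OF IH] by simp
    qed
  qed
next
  case (ctx_where L L' M)
  then show ?case by (auto intro: jn_weaken)
qed




fun isMu :: "trm \<Rightarrow> bool" where
  "isMu (Mu _) = True"
| "isMu _ = False"

fun admT :: "trm \<Rightarrow> nat" where
  "admT (Mu (Jump l L)) = adm L"
| "admT M = adm M"

definition TT :: "(nat \<Rightarrow> lterm) \<Rightarrow> (nat \<Rightarrow> lterm) \<Rightarrow> trm \<Rightarrow> lterm" where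
  "TT \<sigma> \<kappa> M = LLam (cpsT \<sigma> \<kappa> M (LVar 0))"

definition dE :: "trm \<Rightarrow> trm \<Rightarrow> bool" where
  "dE M N \<longleftrightarrow> (isMu N \<and> \<not> isMu M) \<or> (isMu N = isMu M \<and> admT N < admT M)"

lemma E0_notMu: "E0 P P' \<Longrightarrow> \<not> isMu P"
  by (induct rule: E0.induct) auto

lemma admT_nonMu: "\<not> isMu M \<Longrightarrow> admT M = adm M"
  by (cases M) auto

lemma TT_Mu_step:
  "hstep (TT \<sigma> \<kappa> (Mu (Jump l L)))
     (LLam (cpsT \<sigma> (\<lambda>n. lsubst (upo \<kappa> n) (LVar 0) 0) L (lsubst (upo \<kappa> l) (LVar 0) 0)))"
proof -
  have "hstep (TT \<sigma> \<kappa> (Mu (Jump l L)))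
     (LLam (lsubst (cpsT (liftE 0 \<sigma>) (upo \<kappa>) L (upo \<kappa> l)) (LVar 0) 0))"
    unfolding TT_def by (auto intro!: habs hred)
  then show ?thesis by (simp add: cps_subst)
qed

lemma Estep_sim: "Estep M N \<Longrightarrow> jn (TT \<sigma> \<kappa> M) (TT \<sigma> \<kappa> N) (dE M N)"
proof (induct rule: Estep.induct)
  case (rename l J)
  define \<kappa>1 where "\<kappa>1 = (\<lambda>n. lsubst (upo \<kappa> n) (LVar 0) 0)"
  have s1: "hstep (TT \<sigma> \<kappa> (Mu (Jump l (Mu J)))) (LLam (cpsT \<sigma> \<kappa>1 (Mu J) (\<kappa>1 l)))"
    using TT_Mu_step[of \<sigma> \<kappa> l "Mu J"] by (simp add: \<kappa>1_def)
  have s2: "hstep (LLam (cpsT \<sigma> \<kappa>1 (Mu J) (\<kappa>1 l)))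
     (LLam (lsubst (cpsJ (liftE 0 \<sigma>) (upo \<kappa>1) J) (\<kappa>1 l) 0))"
    by (auto intro!: habs hred)
  have s3: "hstep (TT \<sigma> \<kappa> (Mu (kren0 l J)))
     (LLam (lsubst (cpsJ (liftE 0 \<sigma>) (upo \<kappa>) (kren0 l J)) (LVar 0) 0))"
    unfolding TT_def by (auto intro!: habs hred)
  have eq: "LLam (lsubst (cpsJ (liftE 0 \<sigma>) (upo \<kappa>1) J) (\<kappa>1 l) 0)
     = LLam (lsubst (cpsJ (liftE 0 \<sigma>) (upo \<kappa>) (kren0 l J)) (LVar 0) 0)"
    unfolding kren0_def \<kappa>1_def
    by (auto simp: cps_subst intro!: cpsJ_cong simp: fun_eq_iff scons_apply split: nat.split)
  have "jn (LLam (cpsT \<sigma> \<kappa>1 (Mu J) (\<kappa>1 l))) (TT \<sigma> \<kappa> (Mu (kren0 l J))) True"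
    by (rule jn_pre[OF s2 s3]) (simp add: eq jn_eq)
  then show ?case by (rule jn_preL[OF s1])
next
  case (top L M)
  have J: "jn (TT \<sigma> \<kappa> L) (TT \<sigma> \<kappa> M) (adm M < adm L)"
    unfolding TT_def by (rule jn_abs) (rule E0_sim[OF top])
  have nm: "\<not> isMu L" using E0_notMu top by blast
  show ?case
    by (rule jn_weaken[OF J]) (use nm in \<open>cases "isMu M"; auto simp: dE_def admT_nonMu\<close>)
next
  case (under_mu L M l)
  have "jn (LLam (cpsT \<sigma> (\<lambda>n. lsubst (upo \<kappa> n) (LVar 0) 0) L (lsubst (upo \<kappa> l) (LVar 0) 0)))
           (LLam (cpsT \<sigma> (\<lambda>n. lsubst (upo \<kappa> n) (LVar 0) 0) M (lsubst (upo \<kappa> l) (LVar 0) 0)))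
           (adm M < adm L)"
    by (rule jn_abs) (rule E0_sim[OF under_mu])
  then have "jn (TT \<sigma> \<kappa> (Mu (Jump l L))) (TT \<sigma> \<kappa> (Mu (Jump l M))) (adm M < adm L)"
    by (rule jn_pre[OF TT_Mu_step TT_Mu_step])
  then show ?case by (rule jn_weaken) (simp add: dE_def)
qed

lemma E0_normal_hv:
  "\<not> is_val N \<Longrightarrow> \<not> isMu N \<Longrightarrow> (\<forall>N'. \<not> E0 N N') \<Longrightarrow> (\<forall>n. \<exists>i. \<sigma> n = LVar i)
   \<Longrightarrow> head_var (cpsT \<sigma> \<kappa> N K)"
proof (induct N arbitrary: K)
  case (App s t)
  show ?case
  proof (cases "is_val s")
    case True
    note sv = True
    show ?thesis
    proof (cases "is_val t")
      case True
      then obtain x where "s = Var x"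
        using sv App(5) E0.beta_v[of t] by (cases s) auto
      moreover from App(6) obtain i where "\<sigma> x = LVar i" by blast
      ultimately show ?thesis using True by simp
    next
      case False
      have "\<not> isMu t" using App(5) E0.app_mu[OF sv] by (cases t) auto
      moreover have "\<forall>N'. \<not> E0 t N'" using App(5) E0.ctx_argR[OF sv] by blast
      ultimately show ?thesis using App(2)[OF False _ _ App(6)] sv False by simp
    qed
  next
    case False
    have "\<not> isMu s" using App(5) E0.mu_app by (cases s) auto
    moreover have "\<forall>N'. \<not> E0 s N'" using App(5) E0.ctx_funL by blast
    ultimately show ?thesis using App(1)[OF False _ _ App(6)] False by simp
  qed
next
  case (Where L M)
  have "\<not> is_val M" using Where(5) E0.where_v by blast
  moreover have "\<not> isMu M" using Where(5) E0.where_mu by (cases M) auto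
  moreover have "\<forall>N'. \<not> E0 M N'" using Where(5) E0.ctx_where by blast
  ultimately show ?case using Where(2)[OF _ _ _ Where(6)] by simp
qed auto

lemma hnf_LLam_hv: "head_var t \<Longrightarrow> hnf (LLam t)"
  by (simp add: hnf_if_head_var)

lemma E_normal_hnf:
  assumes en: "E_normal N" and sv: "\<forall>n. \<exists>i. \<sigma> n = LVar i" and kv: "\<forall>n. \<exists>i. \<kappa> n = LVar i"
  shows "\<exists>u. hstep\<^sup>*\<^sup>* (TT \<sigma> \<kappa> N) u \<and> hnf u"
proof (cases "is_val N")
  case True
  then have "hnf (TT \<sigma> \<kappa> N)" unfolding TT_def by simp
  then show ?thesis by blast
next
  case nv: False
  show ?thesis
  proof (cases "isMu N")
    case True
    then obtain l L where N: "N = Mu (Jump l L)" by (cases N) (auto, metis jmp.exhaust)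
    define \<kappa>1 where "\<kappa>1 = (\<lambda>n. lsubst (upo \<kappa> n) (LVar 0) 0)"
    have k1: "\<forall>n. \<exists>i. \<kappa>1 n = LVar i"
    proof
      fix n show "\<exists>i. \<kappa>1 n = LVar i"
      proof (cases n)
        case 0 then show ?thesis by (simp add: \<kappa>1_def)
      next
        case (Suc m)
        from kv obtain i where "\<kappa> m = LVar i" by blast
        then show ?thesis by (simp add: \<kappa>1_def Suc)
      qed
    qed
    have st: "hstep (TT \<sigma> \<kappa> N) (LLam (cpsT \<sigma> \<kappa>1 L (\<kappa>1 l)))"
      unfolding N \<kappa>1_def by (rule TT_Mu_step)
    have nL: "\<not> isMu L"
    proof
      assume "isMu L"
      then obtain J where "L = Mu J" by (cases L) auto
      then show False using en N Estep.rename unfolding E_normal_def by blast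
    qed
    have nE: "\<forall>L'. \<not> E0 L L'" using en N Estep.under_mu unfolding E_normal_def by blast
    have "head_var (cpsT \<sigma> \<kappa>1 L (\<kappa>1 l))"
    proof (cases "is_val L")
      case True
      from k1 obtain i where "\<kappa>1 l = LVar i" by blast
      then show ?thesis using True by simp
    next
      case False
      then show ?thesis using E0_normal_hv nL nE sv by blast
    qed
    then have "hnf (LLam (cpsT \<sigma> \<kappa>1 L (\<kappa>1 l)))" by (rule hnf_LLam_hv)
    then show ?thesis using st by blast
  next
    case False
    have "\<forall>N'. \<not> E0 N N'" using en Estep.top unfolding E_normal_def by blast
    then have "head_var (cpsT \<sigma> \<kappa> N (LVar 0))" using E0_normal_hv nv False sv by blast
    then have "hnf (TT \<sigma> \<kappa> N)" unfolding TT_def by (rule hnf_LLam_hv)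
    then show ?thesis by blast
  qed
qed

definition \<sigma>0 :: "nat \<Rightarrow> lterm" where "\<sigma>0 = (\<lambda>n. LVar (Suc (2 * n)))"
definition \<kappa>0 :: "nat \<Rightarrow> lterm" where "\<kappa>0 = (\<lambda>n. LVar (Suc (2 * n + 1)))"

lemma CPS_TT: "CPS M = TT \<sigma>0 \<kappa>0 M"
  unfolding CPS_def TT_def \<sigma>0_def \<kappa>0_def by (simp add: cps_cpsT(1))

lemma Esteps_equiv: "Estep\<^sup>*\<^sup>* M N \<Longrightarrow> equivclp beta (TT \<sigma> \<kappa> M) (TT \<sigma> \<kappa> N)"
proof (induct rule: rtranclp_induct)
  case base then show ?case by (simp add: equivclp_def)
next
  case (step N N')
  then have "equivclp beta (TT \<sigma> \<kappa> N) (TT \<sigma> \<kappa> N')" using Estep_sim jn_equiv by blast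
  with step(3) show ?case by (rule equivclp_trans)
qed

lemma fwd: "cbv_terminates M \<Longrightarrow> solvable (CPS M)"
proof -
  assume "cbv_terminates M"
  then obtain N where N: "Estep\<^sup>*\<^sup>* M N" "E_normal N" unfolding cbv_terminates_def by blast
  have "\<forall>n. \<exists>i. \<sigma>0 n = LVar i" "\<forall>n. \<exists>i. \<kappa>0 n = LVar i" unfolding \<sigma>0_def \<kappa>0_def by auto
  then obtain u where u: "hstep\<^sup>*\<^sup>* (TT \<sigma>0 \<kappa>0 N) u" "hnf u" using E_normal_hnf N(2) by blast
  have "equivclp beta (TT \<sigma>0 \<kappa>0 N) u"
    by (rule predicate2D[OF rtranlcp_le_equivclp hsteps_betas[OF u(1)]])
  with Esteps_equiv[OF N(1)] have "equivclp beta (TT \<sigma>0 \<kappa>0 M) u" by (rule equivclp_trans)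
  then show ?thesis unfolding solvable_def CPS_TT using u(2) by blast
qed

lemma bwd_step:
  assumes "hn (TT \<sigma> \<kappa> M) n" "\<not> E_normal M"
  shows "\<exists>N m. Estep M N \<and> hn (TT \<sigma> \<kappa> N) m \<and> (m < n \<or> (m = n \<and> dE M N))"
proof -
  from assms(2) obtain N where N: "Estep M N" unfolding E_normal_def by blast
  from jn_hn[OF Estep_sim[OF N] assms(1)] N show ?thesis by blast
qed

lemma cbv_step: "Estep M N \<Longrightarrow> cbv_terminates N \<Longrightarrow> cbv_terminates M"
  unfolding cbv_terminates_def by (meson converse_rtranclp_into_rtranclp)

lemma cbv_normal: "E_normal M \<Longrightarrow> cbv_terminates M"
  unfolding cbv_terminates_def by blast

lemma bwd: "hn (TT \<sigma> \<kappa> M) n \<Longrightarrow> cbv_terminates M"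
proof (induct n arbitrary: M rule: less_induct)
  case (less n M0)
  note IHn = less(1)
  have mu: "isMu M \<Longrightarrow> hn (TT \<sigma> \<kappa> M) n \<Longrightarrow> cbv_terminates M" for M
  proof (induct "admT M" arbitrary: M rule: less_induct)
    case (less M)
    show ?case
    proof (cases "E_normal M")
      case True then show ?thesis by (rule cbv_normal)
    next
      case False
      then obtain N m where N: "Estep M N" "hn (TT \<sigma> \<kappa> N) m" "m < n \<or> (m = n \<and> dE M N)"
        using bwd_step less(3) by blast
      have "cbv_terminates N"
      proof (cases "m < n")
        case True then show ?thesis using IHn N(2) by blast
      next
        case False
        then have "m = n" "dE M N" using N(3) by auto
        then have "isMu N" "admT N < admT M" using less(2) unfolding dE_def by auto
        then show ?thesis using less(1) N(2) \<open>m = n\<close> by blast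
      qed
      then show ?thesis using N(1) by (rule cbv_step[rotated])
    qed
  qed
  have nmu: "\<not> isMu M \<Longrightarrow> hn (TT \<sigma> \<kappa> M) n \<Longrightarrow> cbv_terminates M" for M
  proof (induct "admT M" arbitrary: M rule: less_induct)
    case (less M)
    show ?case
    proof (cases "E_normal M")
      case True then show ?thesis by (rule cbv_normal)
    next
      case False
      then obtain N m where N: "Estep M N" "hn (TT \<sigma> \<kappa> N) m" "m < n \<or> (m = n \<and> dE M N)"
        using bwd_step less(3) by blast
      have "cbv_terminates N"
      proof (cases "m < n")
        case True then show ?thesis using IHn N(2) by blast
      next
        case False
        then have "m = n" "dE M N" using N(3) by auto
        show ?thesis
        proof (cases "isMu N")
          case True then show ?thesis using mu N(2) \<open>m = n\<close> by blast
        next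
          case False
          then have "admT N < admT M" using \<open>dE M N\<close> less(2) unfolding dE_def by auto
          then show ?thesis using less(1) N(2) \<open>m = n\<close> False by blast
        qed
      qed
      then show ?thesis using N(1) by (rule cbv_step[rotated])
    qed
  qed
  show ?case using mu nmu less(2) by blast
qed

theorem theorem2p31:
  fixes M :: trm
  shows "cbv_terminates M \<longleftrightarrow> solvable (CPS M)"
proof
  assume "cbv_terminates M" then show "solvable (CPS M)" by (rule fwd)
next
  assume "solvable (CPS M)"
  then obtain v where v: "hstep\<^sup>*\<^sup>* (CPS M) v" "hnf v" using solvable_hnorm by blast
  then obtain n where "(hstep ^^ n) (CPS M) v" using rtranclp_imp_relpowp by metis
  then have "hn (TT \<sigma>0 \<kappa>0 M) n" unfolding hn_def CPS_TT using v(2) by blast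
  then show "cbv_terminates M" by (rule bwd)
qed


end
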